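(* There is an absolute constant $C$ such that the following holds. Let $f:\mathbb{R}^n\to\{-1,1\}$ and $\epsilon>0$. Suppose there is a linear $k$-junta $g:\mathbb{R}^n\to\{-1,1\}$ and a function $h:\mathbb{R}^n\to\{-1,1\}$ with $\mathsf{surf}(h)\le s$ such that both $g$ and $h$ are $\epsilon$-close to $f$. Then there is a function $\tilde h:\mathbb{R}^n\to\{-1,1\}$ that is a linear $k$-junta and has $\mathsf{surf}(\tilde h)\le s(1+\sqrt\epsilon)$, and which is $C\sqrt\epsilon$-close to $f$.
   Context: $\gamma_n$ is the standard Gaussian measure; $f,g$ are $\epsilon$-close if $\Pr_{x\sim\gamma_n}[f(x)\ne g(x)]\le\epsilon$. A linear $k$-junta is $x\mapsto G(\langle u_1,x\rangle,\dots,\langle u_k,x\rangle)$ for at most $k$ orthonormal vectors $u_i$ and some function $G$. $\mathsf{surf}(h)=\Gamma(\{h=1\})$ where $\Gamma(A)=\liminf_{\delta\to0}\gamma_n(A_\delta\setminus A)/\delta$ and $A_\delta=\{x:d(x,A)\le\delta\}$. *)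

theory Defs
  imports "HOL-Probability.Probability"
begin

text \<open>Euclidean space R^n is represented explicitly (so that the absolute constant C can be
quantified before the dimension n): points are functions nat => real that are extensional
on the index set {..<n}, i.e. elements of the space of the product measure below.\<close>

definition gauss :: "nat \<Rightarrow> (nat \<Rightarrow> real) measure" where
  "gauss n = PiM {..<n} (\<lambda>_. density lborel std_normal_density)"

definition ip :: "nat \<Rightarrow> (nat \<Rightarrow> real) \<Rightarrow> (nat \<Rightarrow> real) \<Rightarrow> real" where
  "ip n u x = (\<Sum>i<n. u i * x i)"

definition edist :: "nat \<Rightarrow> (nat \<Rightarrow> real) \<Rightarrow> (nat \<Rightarrow> real) \<Rightarrow> real" where
  "edist n x y = sqrt (\<Sum>i<n. (x i - y i)\<^sup>2)"

text \<open>Closed delta-neighbourhood A_delta = {x : d(x,A) <= delta} (empty if A is empty,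
since d(x, empty) = infinity).\<close>
definition nbhd :: "nat \<Rightarrow> (nat \<Rightarrow> real) set \<Rightarrow> real \<Rightarrow> (nat \<Rightarrow> real) set" where
  "nbhd n A \<delta> = {x \<in> space (gauss n). A \<noteq> {} \<and> (INF a\<in>A. edist n x a) \<le> \<delta>}"

definition gsurf_set :: "nat \<Rightarrow> (nat \<Rightarrow> real) set \<Rightarrow> ereal" where
  "gsurf_set n A = Liminf (at_right 0)
      (\<lambda>\<delta>. ereal (measure (gauss n) (nbhd n A \<delta> - A) / \<delta>))"

definition surf :: "nat \<Rightarrow> ((nat \<Rightarrow> real) \<Rightarrow> real) \<Rightarrow> ereal" where
  "surf n h = gsurf_set n {x \<in> space (gauss n). h x = 1}"

definition boolean_fun :: "nat \<Rightarrow> ((nat \<Rightarrow> real) \<Rightarrow> real) \<Rightarrow> bool" where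
  "boolean_fun n f \<longleftrightarrow> f \<in> borel_measurable (gauss n) \<and>
      (\<forall>x\<in>space (gauss n). f x \<in> {-1, 1})"

definition eps_close :: "nat \<Rightarrow> real \<Rightarrow> ((nat \<Rightarrow> real) \<Rightarrow> real) \<Rightarrow> ((nat \<Rightarrow> real) \<Rightarrow> real) \<Rightarrow> bool" where
  "eps_close n \<epsilon> f g \<longleftrightarrow> measure (gauss n) {x \<in> space (gauss n). f x \<noteq> g x} \<le> \<epsilon>"

definition linear_junta :: "nat \<Rightarrow> nat \<Rightarrow> ((nat \<Rightarrow> real) \<Rightarrow> real) \<Rightarrow> bool" where
  "linear_junta n k f \<longleftrightarrow> (\<exists>U G. finite U \<and> card U \<le> k \<and> U \<subseteq> space (gauss n) \<and>
      (\<forall>u\<in>U. ip n u u = 1) \<and> (\<forall>u\<in>U. \<forall>v\<in>U. u \<noteq> v \<longrightarrow> ip n u v = 0) \<and>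
      (\<forall>x\<in>space (gauss n). f x = G (\<lambda>u\<in>U. ip n u x)))"

end

theory Submission
  imports Defs
begin

definition LL :: "nat \<Rightarrow> (nat \<Rightarrow> real) measure" where
  "LL N = PiM {..<N} (\<lambda>_. lborel)"

definition psi :: "nat \<Rightarrow> (nat \<Rightarrow> real) \<Rightarrow> real" where
  "psi N x = (\<Prod>i<N. std_normal_density (x i))"

lemma gauss_unfold: "gauss N = PiM {..<N} (\<lambda>_. density lborel (\<lambda>x. ennreal (std_normal_density x)))"
  unfolding gauss_def ..

lemma prob_space_gauss: "prob_space (gauss N)"
  unfolding gauss_def
  by (auto intro!: prob_space_PiM prob_space_normal_density)

lemma sets_gauss: "sets (gauss N) = sets (LL N)"
  unfolding gauss_def LL_def by (intro sets_PiM_cong) auto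

lemma space_gauss: "space (gauss N) = PiE {..<N} (\<lambda>_. UNIV)"
  unfolding gauss_def by (simp add: space_PiM)

lemma space_LL: "space (LL N) = PiE {..<N} (\<lambda>_. UNIV)"
  unfolding LL_def by (simp add: space_PiM)

lemma psi_measurable[measurable]: "psi N \<in> borel_measurable (LL N)"
  unfolding psi_def LL_def by measurable

lemma gauss_density: "gauss N = density (LL N) (\<lambda>x. ennreal (psi N x))"
proof -
  interpret product_sigma_finite "\<lambda>_. lborel :: real measure" by standard
  have "density (LL N) (\<lambda>x. ennreal (psi N x)) = PiM {..<N} (\<lambda>_. density lborel (\<lambda>x. ennreal (std_normal_density x)))"
  proof (rule product_sigma_finite.PiM_eqI)
    show "product_sigma_finite (\<lambda>_. density lborel (\<lambda>x. ennreal (std_normal_density x)))"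
      by (simp add: product_sigma_finite.intro prob_space_imp_sigma_finite prob_space_normal_density)
    show "sets (density (LL N) (\<lambda>x. ennreal (psi N x))) = sets (PiM {..<N} (\<lambda>_. density lborel (\<lambda>x. ennreal (std_normal_density x))))"
      unfolding LL_def sets_density by (intro sets_PiM_cong) auto
    fix A assume A: "\<And>i. i \<in> {..<N} \<Longrightarrow> A i \<in> sets (density lborel (\<lambda>x. ennreal (std_normal_density x)))"
    then have A': "\<And>i. i \<in> {..<N} \<Longrightarrow> A i \<in> sets borel" by simp
    have "emeasure (density (LL N) (\<lambda>x. ennreal (psi N x))) (Pi\<^sub>E {..<N} A)
       = (\<integral>\<^sup>+x. ennreal (psi N x) * indicator (Pi\<^sub>E {..<N} A) x \<partial>LL N)"
      using A' psi_measurable[of N] unfolding LL_def by (subst emeasure_density) (auto intro!: sets_PiM_I_finite)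
    also have "\<dots> = (\<integral>\<^sup>+x. (\<Prod>i<N. ennreal (std_normal_density (x i)) * indicator (A i) (x i)) \<partial>LL N)"
      unfolding LL_def
      by (intro nn_integral_cong)
         (auto simp: psi_def indicator_def prod_ennreal prod.distrib space_PiM PiE_iff)
    also have "\<dots> = (\<Prod>i<N. (\<integral>\<^sup>+y. ennreal (std_normal_density y) * indicator (A i) y \<partial>lborel))"
      unfolding LL_def using A' by (subst product_nn_integral_prod) auto
    also have "\<dots> = (\<Prod>i<N. emeasure (density lborel (\<lambda>x. ennreal (std_normal_density x))) (A i))"
      using A' by (intro prod.cong refl) (simp add: emeasure_density)
    finally show "emeasure (density (LL N) (\<lambda>x. ennreal (psi N x))) (Pi\<^sub>E {..<N} A) = (\<Prod>i<N. emeasure (density lborel (\<lambda>x. ennreal (std_normal_density x))) (A i))" .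
  qed auto
  then show ?thesis unfolding gauss_def by simp
qed

lemma LL_coord_affine:
  fixes N i :: nat and \<sigma> :: real and \<tau> :: "(nat \<Rightarrow> real) \<Rightarrow> real"
  assumes i: "i < N" and sig: "\<bar>\<sigma>\<bar> = 1"
    and tau[measurable]: "\<tau> \<in> borel_measurable (LL N)"
    and tau_ind: "\<And>x y. \<tau> (x(i := y)) = \<tau> x"
  defines "F \<equiv> (\<lambda>x. \<lambda>k\<in>{..<N}. if k = i then \<sigma> * x i + \<tau> x else x k)"
  shows "F \<in> measurable (LL N) (LL N)" and "distr (LL N) (LL N) F = LL N"
proof -
  interpret product_sigma_finite "\<lambda>_. lborel :: real measure" by standard
  have tau': "\<tau> \<in> borel_measurable (PiM {..<N} (\<lambda>_. lborel))" using tau unfolding LL_def .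
  show Fm: "F \<in> measurable (LL N) (LL N)"
    unfolding F_def LL_def
  proof (rule measurable_restrict)
    fix k assume "k \<in> {..<N}"
    show "(\<lambda>x. if k = i then \<sigma> * x i + \<tau> x else x k) \<in> measurable (PiM {..<N} (\<lambda>_. lborel)) lborel"
      unfolding measurable_lborel2
    proof (cases "k = i")
      case True then show ?thesis using i tau' by simp
    next
      case False then show ?thesis using \<open>k \<in> {..<N}\<close> by simp
    qed
  qed
  let ?I = "{..<N} - {i}"
  have ins: "{..<N} = insert i ?I" using i by auto
  have PiMeq: "PiM {..<N} (\<lambda>_. lborel) = PiM (insert i ?I) (\<lambda>_. lborel :: real measure)"
    by (simp only: ins[symmetric])
  show "distr (LL N) (LL N) F = LL N"
  proof (rule measure_eqI)
    show "sets (distr (LL N) (LL N) F) = sets (LL N)" by simp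
    fix A assume A: "A \<in> sets (distr (LL N) (LL N) F)"
    then have A': "A \<in> sets (LL N)" by simp
    have A'': "A \<in> sets (PiM (insert i ?I) (\<lambda>_. lborel))"
      unfolding ins[symmetric] using A' unfolding LL_def .
    have "emeasure (distr (LL N) (LL N) F) A = (\<integral>\<^sup>+x. indicator A x \<partial>distr (LL N) (LL N) F)"
      using A by simp
    also have "\<dots> = (\<integral>\<^sup>+x. indicator A (F x) \<partial>LL N)"
      using A' Fm by (intro nn_integral_distr) auto
    also have "\<dots> = (\<integral>\<^sup>+x. (\<integral>\<^sup>+y. indicator A (F (x(i := y))) \<partial>lborel) \<partial>PiM ?I (\<lambda>_. lborel))"
    proof -
      have m: "(\<lambda>x. indicator A (F x) :: ennreal) \<in> borel_measurable (PiM (insert i ?I) (\<lambda>_. lborel))"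
        unfolding ins[symmetric] using A' Fm unfolding LL_def by simp
      show ?thesis unfolding LL_def
        by (subst PiMeq, rule product_nn_integral_insert) (use m in auto)
    qed
    also have "\<dots> = (\<integral>\<^sup>+x. (\<integral>\<^sup>+y. indicator A (x(i := y)) \<partial>lborel) \<partial>PiM ?I (\<lambda>_. lborel))"
    proof (rule nn_integral_cong)
      fix x assume x: "x \<in> space (PiM ?I (\<lambda>_. lborel :: real measure))"
      then have xe: "x \<in> extensional ?I" by (simp add: space_PiM PiE_def)
      have Fx: "F (x(i := y)) = x(i := \<sigma> * y + \<tau> x)" for y
      proof
        fix k show "F (x(i := y)) k = (x(i := \<sigma> * y + \<tau> x)) k"
          using xe i by (cases "k = i") (auto simp: F_def tau_ind extensional_def)
      qed
      have mx: "(\<lambda>y. x(i := y)) \<in> measurable lborel (PiM (insert i ?I) (\<lambda>_. lborel))"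
        using x by (intro measurable_component_update) auto
      have mA: "(\<lambda>y. indicator A (x(i := y)) :: ennreal) \<in> borel_measurable borel"
        using measurable_comp[OF mx borel_measurable_indicator[OF A'']]
        by (simp add: comp_def)
      have "(\<integral>\<^sup>+y. indicator A (x(i := y)) \<partial>lborel) = ennreal \<bar>\<sigma>\<bar> * (\<integral>\<^sup>+y. indicator A (x(i := \<tau> x + \<sigma> * y)) \<partial>lborel)"
        using sig by (intro nn_integral_real_affine[OF mA]) auto
      then show "(\<integral>\<^sup>+y. indicator A (F (x(i := y))) \<partial>lborel) = (\<integral>\<^sup>+y. indicator A (x(i := y)) \<partial>lborel)"
        using sig by (simp add: Fx add.commute)
    qed
    also have "\<dots> = (\<integral>\<^sup>+x. indicator A x \<partial>LL N)"
    proof -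
      have m: "(\<lambda>x. indicator A x :: ennreal) \<in> borel_measurable (PiM (insert i ?I) (\<lambda>_. lborel))"
        unfolding ins[symmetric] using A' unfolding LL_def by simp
      show ?thesis unfolding LL_def
        by (subst PiMeq, rule product_nn_integral_insert[symmetric]) (use m in auto)
    qed
    also have "\<dots> = emeasure (LL N) A" using A' by simp
    finally show "emeasure (distr (LL N) (LL N) F) A = emeasure (LL N) A" .
  qed
qed

definition llp :: "nat \<Rightarrow> ((nat \<Rightarrow> real) \<Rightarrow> (nat \<Rightarrow> real)) \<Rightarrow> bool" where
  "llp N F \<longleftrightarrow> F \<in> measurable (LL N) (LL N) \<and> distr (LL N) (LL N) F = LL N"

definition gp :: "nat \<Rightarrow> ((nat \<Rightarrow> real) \<Rightarrow> (nat \<Rightarrow> real)) \<Rightarrow> bool" where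
  "gp N F \<longleftrightarrow> F \<in> measurable (gauss N) (gauss N) \<and> distr (gauss N) (gauss N) F = gauss N"

lemma llp_comp: "llp N F \<Longrightarrow> llp N G \<Longrightarrow> llp N (G \<circ> F)"
  unfolding llp_def by (auto simp: distr_distr[symmetric])

lemma llp_cong: "llp N F \<Longrightarrow> (\<And>x. x \<in> space (LL N) \<Longrightarrow> F x = G x) \<Longrightarrow> llp N G"
  unfolding llp_def
  by (metis distr_cong measurable_cong)

lemma gp_comp: "gp N F \<Longrightarrow> gp N G \<Longrightarrow> gp N (G \<circ> F)"
  unfolding gp_def by (auto simp: distr_distr[symmetric])

lemma gp_cong: "gp N F \<Longrightarrow> (\<And>x. x \<in> space (gauss N) \<Longrightarrow> F x = G x) \<Longrightarrow> gp N G"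
  unfolding gp_def
  by (metis distr_cong measurable_cong)

lemma psi_norm: "psi N x = (1 / sqrt (2 * pi)) ^ N * exp (- (\<Sum>i<N. (x i)\<^sup>2) / 2)"
proof -
  have "psi N x = (\<Prod>i<N. exp (- (x i)\<^sup>2 / 2)) / sqrt (2 * pi) ^ N"
    unfolding psi_def std_normal_density_def by (simp add: prod_dividef)
  also have "(\<Prod>i<N. exp (- (x i)\<^sup>2 / 2)) = exp (\<Sum>i<N. - (x i)\<^sup>2 / 2)"
    by (simp add: exp_sum)
  also have "(\<Sum>i<N. - (x i)\<^sup>2 / 2) = - (\<Sum>i<N. (x i)\<^sup>2) / 2"
    by (simp add: sum_divide_distrib sum_negf)
  finally show ?thesis by (simp add: power_divide)
qed

lemma gp_from_llp:
  assumes "llp N F" and norm: "\<And>x. x \<in> space (LL N) \<Longrightarrow> (\<Sum>i<N. (F x i)\<^sup>2) = (\<Sum>i<N. (x i)\<^sup>2)"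
  shows "gp N F"
proof -
  have Fm: "F \<in> measurable (LL N) (LL N)" and D: "distr (LL N) (LL N) F = LL N"
    using assms unfolding llp_def by auto
  have ps: "psi N (F x) = psi N x" if "x \<in> space (LL N)" for x
    using norm[OF that] by (simp add: psi_norm)
  have Fm': "F \<in> measurable (gauss N) (gauss N)"
    using Fm by (simp add: sets_gauss cong: measurable_cong_sets)
  have "distr (gauss N) (gauss N) F = gauss N"
  proof (rule measure_eqI)
    show "sets (distr (gauss N) (gauss N) F) = sets (gauss N)" by simp
    fix A assume "A \<in> sets (distr (gauss N) (gauss N) F)"
    then have A: "A \<in> sets (LL N)" by (simp add: sets_gauss)
    have "emeasure (distr (gauss N) (gauss N) F) A = emeasure (gauss N) (F -` A \<inter> space (gauss N))"
      using A Fm' by (simp add: emeasure_distr sets_gauss)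
    also have "\<dots> = (\<integral>\<^sup>+x. ennreal (psi N x) * indicator (F -` A \<inter> space (LL N)) x \<partial>LL N)"
      using A Fm measurable_sets[OF Fm A] by (subst gauss_density, subst emeasure_density) (auto simp: space_gauss space_LL)
    also have "\<dots> = (\<integral>\<^sup>+x. ennreal (psi N (F x)) * indicator A (F x) \<partial>LL N)"
      by (intro nn_integral_cong) (auto simp: ps indicator_def)
    also have "\<dots> = (\<integral>\<^sup>+y. ennreal (psi N y) * indicator A y \<partial>distr (LL N) (LL N) F)"
      using A Fm by (subst nn_integral_distr) auto
    also have "\<dots> = emeasure (gauss N) A"
      using A by (simp add: D gauss_density emeasure_density)
    finally show "emeasure (distr (gauss N) (gauss N) F) A = emeasure (gauss N) A" .
  qed
  with Fm' show ?thesis unfolding gp_def by simp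
qed

definition shear :: "nat \<Rightarrow> nat \<Rightarrow> nat \<Rightarrow> real \<Rightarrow> (nat \<Rightarrow> real) \<Rightarrow> (nat \<Rightarrow> real)" where
  "shear N i j t = (\<lambda>x. \<lambda>k\<in>{..<N}. if k = i then 1 * x i + t * x j else x k)"

definition negc :: "nat \<Rightarrow> nat \<Rightarrow> (nat \<Rightarrow> real) \<Rightarrow> (nat \<Rightarrow> real)" where
  "negc N i = (\<lambda>x. \<lambda>k\<in>{..<N}. if k = i then (-1) * x i + 0 else x k)"

definition rot :: "nat \<Rightarrow> nat \<Rightarrow> nat \<Rightarrow> real \<Rightarrow> real \<Rightarrow> (nat \<Rightarrow> real) \<Rightarrow> (nat \<Rightarrow> real)" where
  "rot N i j c s = (\<lambda>x. \<lambda>k\<in>{..<N}. if k = i then c * x i - s * x j else if k = j then s * x i + c * x j else x k)"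

lemma llp_shear: "i < N \<Longrightarrow> j < N \<Longrightarrow> i \<noteq> j \<Longrightarrow> llp N (shear N i j t)"
  unfolding llp_def shear_def
  by (intro conjI LL_coord_affine[of i N 1 "\<lambda>x. t * x j"]) (auto simp: LL_def)

lemma llp_negc: "i < N \<Longrightarrow> llp N (negc N i)"
  unfolding llp_def negc_def
  by (intro conjI LL_coord_affine[of i N "-1" "\<lambda>x. 0"]) (auto simp: LL_def)

lemma llp_rot:
  assumes ij: "i < N" "j < N" "i \<noteq> j" and cs: "c\<^sup>2 + s\<^sup>2 = 1"
  shows "llp N (rot N i j c s)"
proof (cases "c = -1")
  case True
  then have s: "s = 0" using cs by simp
  show ?thesis
  proof (rule llp_cong[OF llp_comp[OF llp_negc[of i N] llp_negc[of j N]]])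
    fix x assume "x \<in> space (LL N)"
    then show "(negc N j \<circ> negc N i) x = rot N i j c s x"
      using ij True s by (auto simp: negc_def rot_def space_LL fun_eq_iff)
  qed (use ij in auto)
next
  case False
  then have c1: "1 + c \<noteq> 0" by linarith
  define a where "a = - s / (1 + c)"
  have e1: "1 + a * s = c"
  proof -
    have "1 + a * s = (1 + c - s\<^sup>2) / (1 + c)" using c1 by (simp add: a_def field_simps power2_eq_square)
    also have "\<dots> = (c + c\<^sup>2) / (1 + c)" using cs by (simp add: algebra_simps)
    also have "\<dots> = c" using c1 by (simp add: field_simps power2_eq_square)
    finally show ?thesis .
  qed
  have e2: "a * (2 + a * s) = - s"
  proof -
    have "a * (2 + a * s) = a * (1 + c)" using e1 by simp
    also have "\<dots> = - s" using c1 by (simp add: a_def)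
    finally show ?thesis .
  qed
  show ?thesis
  proof (rule llp_cong[OF llp_comp[OF llp_comp[OF llp_shear[of i N j a] llp_shear[of j N i s]] llp_shear[of i N j a]]])
    fix x assume x: "x \<in> space (LL N)"
    show "(shear N i j a \<circ> (shear N j i s \<circ> shear N i j a)) x = rot N i j c s x"
    proof
      fix k
      show "(shear N i j a \<circ> (shear N j i s \<circ> shear N i j a)) x k = rot N i j c s x k"
      proof -
        have A: "x i + a * x j + a * (x j + s * (x i + a * x j)) = c * x i - s * x j"
        proof -
          have "x i + a * x j + a * (x j + s * (x i + a * x j)) = (1 + a * s) * x i + a * (2 + a * s) * x j"
            by (simp add: algebra_simps)
          then show ?thesis using e1 e2 by simp
        qed
        have B: "x j + s * (x i + a * x j) = s * x i + (1 + a * s) * x j"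
          by (simp add: algebra_simps)
        show ?thesis using ij A B e1 by (auto simp: shear_def rot_def)
      qed
    qed
  qed (use ij in auto)
qed

lemma rot_norm:
  assumes ij: "i < N" "j < N" "i \<noteq> j" and cs: "c\<^sup>2 + s\<^sup>2 = 1"
  shows "(\<Sum>k<N. (rot N i j c s x k)\<^sup>2) = (\<Sum>k<N. (x k)\<^sup>2)"
proof -
  have split: "(\<Sum>k<N. f k) = f i + f j + (\<Sum>k\<in>{..<N} - {i, j}. f k)" for f :: "nat \<Rightarrow> real"
  proof -
    have "(\<Sum>k<N. f k) = f i + (\<Sum>k\<in>{..<N} - {i}. f k)"
      using ij by (simp add: sum.remove)
    also have "(\<Sum>k\<in>{..<N} - {i}. f k) = f j + (\<Sum>k\<in>{..<N} - {i} - {j}. f k)"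
      using ij by (subst sum.remove[of _ j]) auto
    finally show ?thesis by (simp add: Diff_insert2[symmetric] insert_commute add.assoc)
  qed
  have "(c * x i - s * x j)\<^sup>2 + (s * x i + c * x j)\<^sup>2 = (c\<^sup>2 + s\<^sup>2) * ((x i)\<^sup>2 + (x j)\<^sup>2)"
    by (simp add: algebra_simps power2_eq_square)
  also have "\<dots> = (x i)\<^sup>2 + (x j)\<^sup>2" using cs by simp
  finally have *: "(c * x i - s * x j)\<^sup>2 + (s * x i + c * x j)\<^sup>2 = (x i)\<^sup>2 + (x j)\<^sup>2" .
  show ?thesis
    apply (subst (1 2) split)
    using ij * by (simp add: rot_def add.assoc)
qed

lemma gp_rot:
  assumes ij: "i < N" "j < N" "i \<noteq> j" and cs: "c\<^sup>2 + s\<^sup>2 = 1"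
  shows "gp N (rot N i j c s)"
  by (rule gp_from_llp[OF llp_rot[OF assms] rot_norm[OF assms]])

lemma gp_negc:
  assumes "i < N" shows "gp N (negc N i)"
proof (rule gp_from_llp[OF llp_negc[OF assms]])
  fix x
  show "(\<Sum>k<N. (negc N i x k)\<^sup>2) = (\<Sum>k<N. (x k)\<^sup>2)"
    by (intro sum.cong) (auto simp: negc_def)
qed

definition comb :: "nat \<Rightarrow> (nat \<Rightarrow> real) \<Rightarrow> real \<Rightarrow> (nat \<Rightarrow> real) \<Rightarrow> (nat \<Rightarrow> real)" where
  "comb N a r b = (\<lambda>k\<in>{..<N}. a k + r * b k)"

definition good :: "nat \<Rightarrow> ((nat \<Rightarrow> real) \<Rightarrow> (nat \<Rightarrow> real)) \<Rightarrow> bool" where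
  "good N G \<longleftrightarrow> gp N G \<and>
     (\<forall>a\<in>space (gauss N). \<forall>b\<in>space (gauss N). \<forall>r. G (comb N a r b) = comb N (G a) r (G b)) \<and>
     (\<forall>a\<in>space (gauss N). \<forall>b\<in>space (gauss N). ip N (G a) (G b) = ip N a b) \<and>
     (\<exists>G'. G' \<in> measurable (gauss N) (gauss N) \<and> (\<forall>x\<in>space (gauss N). G' (G x) = x))"

lemma comb_space[simp]: "comb N a r b \<in> space (gauss N)"
  by (simp add: comb_def space_gauss)

lemma gp_space: "gp N G \<Longrightarrow> x \<in> space (gauss N) \<Longrightarrow> G x \<in> space (gauss N)"
  unfolding gp_def using measurable_space[of G "gauss N" "gauss N" x] by auto

lemma good_gp: "good N F \<Longrightarrow> gp N F" by (simp add: good_def)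
lemma good_lin: "good N F \<Longrightarrow> a \<in> space (gauss N) \<Longrightarrow> b \<in> space (gauss N) \<Longrightarrow> F (comb N a r b) = comb N (F a) r (F b)"
  by (simp add: good_def)
lemma good_ip: "good N F \<Longrightarrow> a \<in> space (gauss N) \<Longrightarrow> b \<in> space (gauss N) \<Longrightarrow> ip N (F a) (F b) = ip N a b"
  by (simp add: good_def)
lemma good_inv: "good N F \<Longrightarrow> \<exists>F'. F' \<in> measurable (gauss N) (gauss N) \<and> (\<forall>x\<in>space (gauss N). F' (F x) = x)"
  by (simp add: good_def)

lemma good_comp:
  assumes "good N F" "good N G" shows "good N (G \<circ> F)"
proof -
  obtain F' where F': "F' \<in> measurable (gauss N) (gauss N)" "\<forall>x\<in>space (gauss N). F' (F x) = x"
    using good_inv[OF assms(1)] by blast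
  obtain G' where G': "G' \<in> measurable (gauss N) (gauss N)" "\<forall>x\<in>space (gauss N). G' (G x) = x"
    using good_inv[OF assms(2)] by blast
  have gF: "gp N F" and gG: "gp N G" using assms by (auto simp: good_gp)
  have "(F' \<circ> G') \<in> measurable (gauss N) (gauss N)" using F' G' by (auto intro: measurable_comp)
  moreover have "\<forall>x\<in>space (gauss N). (F' \<circ> G') ((G \<circ> F) x) = x"
    using F' G' gp_space[OF gF] by auto
  ultimately have inv: "\<exists>H. H \<in> measurable (gauss N) (gauss N) \<and> (\<forall>x\<in>space (gauss N). H ((G \<circ> F) x) = x)"
    by blast
  have lin: "(G \<circ> F) (comb N a r b) = comb N ((G \<circ> F) a) r ((G \<circ> F) b)"
    if "a \<in> space (gauss N)" "b \<in> space (gauss N)" for a b r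
    using that gp_space[OF gF] good_lin[OF assms(1)] good_lin[OF assms(2)] by simp
  have ipp: "ip N ((G \<circ> F) a) ((G \<circ> F) b) = ip N a b"
    if "a \<in> space (gauss N)" "b \<in> space (gauss N)" for a b
    using that gp_space[OF gF] good_ip[OF assms(1)] good_ip[OF assms(2)] by simp
  show ?thesis unfolding good_def
    using gp_comp[OF gF gG] lin ipp inv by blast
qed

lemma good_id: "good N (\<lambda>x. x)"
proof -
  have "gp N (\<lambda>x. x)" unfolding gp_def by (simp add: distr_id2)
  then show ?thesis unfolding good_def by (auto intro!: exI[of _ "\<lambda>x. x"])
qed

lemma sum_split2:
  fixes f :: "nat \<Rightarrow> real"
  assumes ij: "i < N" "j < N" "i \<noteq> j"
  shows "(\<Sum>k<N. f k) = f i + f j + (\<Sum>k\<in>{..<N} - {i, j}. f k)"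
proof -
  have "(\<Sum>k<N. f k) = f i + (\<Sum>k\<in>{..<N} - {i}. f k)"
    using ij by (simp add: sum.remove)
  also have "(\<Sum>k\<in>{..<N} - {i}. f k) = f j + (\<Sum>k\<in>{..<N} - {i} - {j}. f k)"
    using ij by (subst sum.remove[of _ j]) auto
  finally show ?thesis by (simp add: Diff_insert2[symmetric] insert_commute add.assoc)
qed

lemma good_rot:
  assumes ij: "i < N" "j < N" "i \<noteq> j" and cs: "c\<^sup>2 + s\<^sup>2 = 1"
  shows "good N (rot N i j c s)"
proof -
  have cs': "c\<^sup>2 + (-s)\<^sup>2 = 1" using cs by simp
  have lin: "rot N i j c s (comb N a r b) = comb N (rot N i j c s a) r (rot N i j c s b)" for a r b
    using ij by (auto simp: rot_def comb_def fun_eq_iff algebra_simps)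
  have ipp: "ip N (rot N i j c s a) (rot N i j c s b) = ip N a b" for a b
  proof -
    have "(c * a i - s * a j) * (c * b i - s * b j) + (s * a i + c * a j) * (s * b i + c * b j)
        = (c\<^sup>2 + s\<^sup>2) * (a i * b i + a j * b j)"
      by (simp add: algebra_simps power2_eq_square)
    then have *: "(c * a i - s * a j) * (c * b i - s * b j) + (s * a i + c * a j) * (s * b i + c * b j)
        = a i * b i + a j * b j" using cs by simp
    show ?thesis unfolding ip_def
      apply (subst (1 2) sum_split2[OF ij])
      using ij * by (simp add: rot_def add.assoc)
  qed
  have inv: "rot N i j c (-s) (rot N i j c s x) = x" if "x \<in> space (gauss N)" for x
  proof
    fix k
    have e1: "c * (c * x i - s * x j) + s * (s * x i + c * x j) = (c\<^sup>2 + s\<^sup>2) * x i"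
      by (simp add: algebra_simps power2_eq_square)
    have e2: "- s * (c * x i - s * x j) + c * (s * x i + c * x j) = (c\<^sup>2 + s\<^sup>2) * x j"
      by (simp add: algebra_simps power2_eq_square)
    show "rot N i j c (-s) (rot N i j c s x) k = x k"
      using ij e1 e2 cs that by (auto simp: rot_def space_gauss PiE_def extensional_def)
  qed
  have m: "rot N i j c (-s) \<in> measurable (gauss N) (gauss N)"
    using gp_rot[OF ij cs'] unfolding gp_def by simp
  show ?thesis unfolding good_def
    using gp_rot[OF ij cs] lin ipp inv m by blast
qed

lemma givens_reduce:
  assumes e: "e \<in> space (gauss N)" and i0: "i0 < N"
    and J: "finite J" "J \<subseteq> {..<N} - {i0}"
  shows "\<exists>G. good N G \<and> (\<forall>k\<in>J. G e k = 0) \<and> (\<forall>k\<in>{..<N} - J - {i0}. G e k = e k)"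
  using J
proof (induction J rule: finite_induct)
  case empty
  show ?case using good_id by auto
next
  case (insert j J)
  then obtain G where G: "good N G" "\<forall>k\<in>J. G e k = 0" "\<forall>k\<in>{..<N} - J - {i0}. G e k = e k"
    by auto
  have j: "j < N" "j \<noteq> i0" "j \<notin> J" using insert by auto
  define a where "a = G e i0"
  define b where "b = G e j"
  show ?case
  proof (cases "b = 0")
    case True
    then show ?thesis using G j unfolding b_def by auto
  next
    case False
    define r where "r = sqrt (a\<^sup>2 + b\<^sup>2)"
    have r0: "r > 0" using False unfolding r_def
      by (simp add: add_nonneg_pos)
    have rr: "r\<^sup>2 = a\<^sup>2 + b\<^sup>2" unfolding r_def by simp
    define c where "c = a / r"
    define s where "s = - b / r"
    have nz: "r\<^sup>2 \<noteq> 0" using r0 by simp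
    have cs: "c\<^sup>2 + s\<^sup>2 = 1"
    proof -
      have "c\<^sup>2 + s\<^sup>2 = (a\<^sup>2 + b\<^sup>2) / r\<^sup>2" by (simp add: c_def s_def power_divide add_divide_distrib)
      also have "\<dots> = 1" using nz rr by simp
      finally show ?thesis .
    qed
    have ij: "i0 < N" "j < N" "i0 \<noteq> j" using i0 j by auto
    let ?R = "rot N i0 j c s"
    have gR: "good N (?R \<circ> G)" by (rule good_comp[OF G(1) good_rot[OF ij cs]])
    have zj: "s * a + c * b = 0" using r0 by (simp add: c_def s_def field_simps)
    show ?thesis
    proof (intro exI conjI ballI)
      show "good N (?R \<circ> G)" by (rule gR)
    next
      fix k assume "k \<in> insert j J"
      then show "(?R \<circ> G) e k = 0"
        using G(2) zj ij j insert.prems by (auto simp: rot_def a_def b_def)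
    next
      fix k assume "k \<in> {..<N} - insert j J - {i0}"
      then show "(?R \<circ> G) e k = e k"
        using G(3) by (auto simp: rot_def)
    qed
  qed
qed

definition hh :: "nat \<Rightarrow> (nat \<Rightarrow> real) \<Rightarrow> (nat \<Rightarrow> real) \<Rightarrow> (nat \<Rightarrow> real)" where
  "hh N e = (\<lambda>w. comb N w (-2 * ip N e w) e)"

lemma coord_meas_gauss': "k < N \<Longrightarrow> (\<lambda>w. w k) \<in> measurable (gauss N) (density lborel (\<lambda>x. ennreal (std_normal_density x)))"
  unfolding gauss_def by (rule measurable_component_singleton) auto

lemma coord_meas_gauss: "k < N \<Longrightarrow> (\<lambda>w. w k) \<in> borel_measurable (gauss N)"
  using coord_meas_gauss'[of k N] by (simp cong: measurable_cong_sets)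

lemma ip_meas_gauss: "(\<lambda>w. ip N e w) \<in> borel_measurable (gauss N)"
  unfolding ip_def by (intro borel_measurable_sum borel_measurable_times) (auto intro: coord_meas_gauss)

lemma hh_meas: "hh N e \<in> measurable (gauss N) (gauss N)"
  unfolding hh_def comb_def
proof (subst (2) gauss_def, rule measurable_restrict)
  fix k assume "k \<in> {..<N}"
  then have "(\<lambda>w. w k + -2 * ip N e w * e k) \<in> borel_measurable (gauss N)"
    by (intro borel_measurable_add borel_measurable_times coord_meas_gauss ip_meas_gauss) auto
  then show "(\<lambda>w. w k + -2 * ip N e w * e k) \<in> measurable (gauss N) (density lborel (\<lambda>x. ennreal (std_normal_density x)))"
    by (simp cong: measurable_cong_sets)
qed

lemma hh_gp:
  assumes e: "e \<in> space (gauss N)" and e1: "ip N e e = 1"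
  shows "gp N (hh N e)"
proof -
  have N: "0 < N"
  proof (rule ccontr)
    assume "\<not> 0 < N" then have "N = 0" by simp
    then show False using e1 by (simp add: ip_def)
  qed
  obtain G where G: "good N G" "\<forall>k\<in>{..<N} - {0}. G e k = 0"
    using givens_reduce[OF e N, of "{..<N} - {0}"] by auto
  have gG: "gp N G" using G(1) by (rule good_gp)
  define v where "v = G e"
  have v: "v \<in> space (gauss N)" unfolding v_def by (rule gp_space[OF gG e])
  have vk: "v k = 0" if "k \<noteq> 0" "k < N" for k
    using G(2) that unfolding v_def by auto
  have ipv: "ip N v w = v 0 * w 0" for w
  proof -
    have "ip N v w = v 0 * w 0 + (\<Sum>k\<in>{..<N} - {0}. v k * w k)"
      unfolding ip_def using N by (simp add: sum.remove)
    also have "(\<Sum>k\<in>{..<N} - {0}. v k * w k) = 0" by (intro sum.neutral) (auto simp: vk)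
    finally show ?thesis by simp
  qed
  have vv: "v 0 * v 0 = 1" using ipv[of v] good_ip[OF G(1) e e] e1 unfolding v_def by simp
  have gv: "gp N (hh N v)"
  proof (rule gp_cong[OF gp_negc[OF N]])
    fix w assume "w \<in> space (gauss N)"
    show "negc N 0 w = hh N v w"
    proof
      fix k
      have "w 0 + -2 * (v 0 * w 0) * v 0 = - w 0" using vv by (simp add: algebra_simps)
      then show "negc N 0 w k = hh N v w k"
        by (auto simp: negc_def hh_def comb_def ipv vk)
    qed
  qed
  have comm: "G (hh N e w) = hh N v (G w)" if w: "w \<in> space (gauss N)" for w
    unfolding hh_def using good_lin[OF G(1) w e] good_ip[OF G(1) e w] v_def by simp
  obtain G' where G': "G' \<in> measurable (gauss N) (gauss N)" "\<forall>x\<in>space (gauss N). G' (G x) = x"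
    using good_inv[OF G(1)] by blast
  have Gm: "G \<in> measurable (gauss N) (gauss N)" and GD: "distr (gauss N) (gauss N) G = gauss N"
    using gG unfolding gp_def by auto
  have hvm: "hh N v \<in> measurable (gauss N) (gauss N)" and hvD: "distr (gauss N) (gauss N) (hh N v) = gauss N"
    using gv unfolding gp_def by auto
  define \<gamma>' where "\<gamma>' = distr (gauss N) (gauss N) (hh N e)"
  have sets': "sets \<gamma>' = sets (gauss N)" and space': "space \<gamma>' = space (gauss N)"
    unfolding \<gamma>'_def by auto
  have "distr \<gamma>' (gauss N) G = distr (gauss N) (gauss N) (G \<circ> hh N e)"
    unfolding \<gamma>'_def by (rule distr_distr[OF Gm hh_meas])
  also have "\<dots> = distr (gauss N) (gauss N) (hh N v \<circ> G)"
    by (rule distr_cong) (auto simp: comm)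
  also have "\<dots> = gauss N"
    using distr_distr[OF hvm Gm] GD hvD by simp
  finally have D1: "distr \<gamma>' (gauss N) G = gauss N" .
  have Gm': "G \<in> measurable \<gamma>' (gauss N)" using Gm sets' by (simp cong: measurable_cong_sets)
  have "\<gamma>' = distr \<gamma>' (gauss N) (\<lambda>x. x)"
    using sets' by (simp add: distr_id2)
  also have "\<dots> = distr \<gamma>' (gauss N) (G' \<circ> G)"
    by (rule distr_cong) (auto simp: space' G'(2))
  also have "\<dots> = distr (distr \<gamma>' (gauss N) G) (gauss N) G'"
    by (rule distr_distr[symmetric, OF G'(1) Gm'])
  also have "\<dots> = distr (gauss N) (gauss N) G'" by (simp add: D1)
  also have "\<dots> = distr (distr (gauss N) (gauss N) G) (gauss N) G'" by (simp add: GD)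
  also have "\<dots> = distr (gauss N) (gauss N) (G' \<circ> G)"
    by (rule distr_distr[OF G'(1) Gm])
  also have "\<dots> = distr (gauss N) (gauss N) (\<lambda>x. x)"
    by (rule distr_cong) (auto simp: G'(2))
  also have "\<dots> = gauss N" by (simp add: distr_id2)
  finally show ?thesis unfolding gp_def \<gamma>'_def using hh_meas by simp
qed

definition fE :: "nat \<Rightarrow> (nat \<Rightarrow> real) set \<Rightarrow> (nat \<Rightarrow> real) \<Rightarrow> (nat \<Rightarrow> real)" where
  "fE N E = (\<lambda>w. \<lambda>k\<in>{..<N}. w k - 2 * (\<Sum>e\<in>E. ip N e w * e k))"

lemma ip_fE:
  assumes "finite E" and orth: "\<forall>e'\<in>E. ip N e e' = 0"
  shows "ip N e (fE N E w) = ip N e w"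
proof -
  have "ip N e (fE N E w) = (\<Sum>i<N. e i * w i - 2 * (\<Sum>e'\<in>E. ip N e' w * (e i * e' i)))"
    unfolding ip_def fE_def by (intro sum.cong) (auto simp: algebra_simps sum_distrib_left)
  also have "\<dots> = ip N e w - 2 * (\<Sum>i<N. \<Sum>e'\<in>E. ip N e' w * (e i * e' i))"
    unfolding ip_def by (simp add: sum_subtractf sum_distrib_left)
  also have "(\<Sum>i<N. \<Sum>e'\<in>E. ip N e' w * (e i * e' i)) = (\<Sum>e'\<in>E. ip N e' w * ip N e e')"
    unfolding ip_def by (subst sum.swap) (simp add: sum_distrib_left)
  also have "\<dots> = 0" using orth by simp
  finally show ?thesis by simp
qed

lemma fE_gp:
  assumes "finite E" "E \<subseteq> space (gauss N)" "\<forall>e\<in>E. ip N e e = 1"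
    "\<forall>e\<in>E. \<forall>e'\<in>E. e \<noteq> e' \<longrightarrow> ip N e e' = 0"
  shows "gp N (fE N E)"
  using assms
proof (induction E rule: finite_induct)
  case empty
  have "gp N (\<lambda>x. x)" using good_id by (rule good_gp)
  then show ?case
  proof (rule gp_cong)
    fix x assume "x \<in> space (gauss N)"
    then show "x = fE N {} x" by (auto simp: fE_def space_gauss PiE_def extensional_def fun_eq_iff)
  qed
next
  case (insert e E)
  have IH: "gp N (fE N E)" using insert by auto
  have he: "gp N (hh N e)" using insert by (intro hh_gp) auto
  have orth: "\<forall>e'\<in>E. ip N e e' = 0" using insert by auto
  show ?case
  proof (rule gp_cong[OF gp_comp[OF IH he]])
    fix w assume "w \<in> space (gauss N)"
    show "(hh N e \<circ> fE N E) w = fE N (insert e E) w"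
      using insert(1,2) ip_fE[OF insert(1) orth, of w]
      by (auto simp: hh_def comb_def fE_def fun_eq_iff algebra_simps)
  qed
qed

abbreviation NN :: "real measure" where "NN \<equiv> density lborel (\<lambda>x. ennreal (std_normal_density x))"

lemma gauss_PiM: "gauss N = PiM {..<N} (\<lambda>_. NN)" unfolding gauss_def ..

lemma sigma_finite_gauss: "sigma_finite_measure (gauss N)"
  using prob_space_gauss[of N] by (simp add: prob_space_imp_sigma_finite)

definition Psi :: "nat \<Rightarrow> (nat \<Rightarrow> real) \<times> (nat \<Rightarrow> real) \<Rightarrow> (nat \<Rightarrow> real)" where
  "Psi n p = (\<lambda>i\<in>{..<2*n}. if i < n then fst p i else snd p (i - n))"

lemma Psi_meas: "Psi n \<in> measurable (gauss n \<Otimes>\<^sub>M gauss n) (gauss (2*n))"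
  unfolding Psi_def
proof (subst (2) gauss_PiM, rule measurable_restrict)
  fix i assume i: "i \<in> {..<2*n}"
  show "(\<lambda>p. if i < n then fst p i else snd p (i - n)) \<in> measurable (gauss n \<Otimes>\<^sub>M gauss n) NN"
  proof (cases "i < n")
    case True
    have "(\<lambda>p. fst p i) \<in> measurable (gauss n \<Otimes>\<^sub>M gauss n) NN"
      using coord_meas_gauss'[OF True] by measurable
    then show ?thesis using True by simp
  next
    case False
    then have "i - n < n" using i by auto
    have "(\<lambda>p. snd p (i - n)) \<in> measurable (gauss n \<Otimes>\<^sub>M gauss n) NN"
      using coord_meas_gauss'[OF \<open>i - n < n\<close>] by measurable
    then show ?thesis using False by simp
  qed
qed

lemma prod_split_2n:
  fixes f :: "nat \<Rightarrow> ennreal"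
  shows "(\<Prod>i<2*n. f i) = (\<Prod>i<n. f i) * (\<Prod>i<n. f (i + n))"
proof -
  have "{..<2*n} = {..<n} \<union> {n..<2*n}" by auto
  then have "(\<Prod>i<2*n. f i) = (\<Prod>i<n. f i) * (\<Prod>i\<in>{n..<2*n}. f i)"
    by (simp add: prod.union_disjoint ivl_disj_int)
  also have "(\<Prod>i\<in>{n..<2*n}. f i) = (\<Prod>i\<in>{0..<n}. f (i + n))"
    using prod.atLeastLessThan_shift_bounds[of f 0 n n] by (simp add: mult_2 o_def add.commute)
  finally show ?thesis by (simp add: atLeast0LessThan)
qed

lemma distr_Psi: "distr (gauss n \<Otimes>\<^sub>M gauss n) (gauss (2*n)) (Psi n) = gauss (2*n)"
proof -
  interpret ps: product_sigma_finite "\<lambda>_. NN"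
    by (simp add: product_sigma_finite.intro prob_space_imp_sigma_finite prob_space_normal_density)
  interpret sf: sigma_finite_measure "gauss n" by (rule sigma_finite_gauss)
  have "distr (gauss n \<Otimes>\<^sub>M gauss n) (gauss (2*n)) (Psi n) = PiM {..<2*n} (\<lambda>_. NN)"
  proof (rule ps.PiM_eqI)
    show "sets (distr (gauss n \<Otimes>\<^sub>M gauss n) (gauss (2*n)) (Psi n)) = sets (PiM {..<2*n} (\<lambda>_. NN))"
      by (simp add: gauss_PiM)
    fix A assume A: "\<And>i. i \<in> {..<2*n} \<Longrightarrow> A i \<in> sets NN"
    have A1: "\<And>i. i \<in> {..<n} \<Longrightarrow> A i \<in> sets NN" and A2: "\<And>i. i \<in> {..<n} \<Longrightarrow> A (i + n) \<in> sets NN"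
      using A by auto
    have pre: "Psi n -` Pi\<^sub>E {..<2*n} A \<inter> space (gauss n \<Otimes>\<^sub>M gauss n)
        = Pi\<^sub>E {..<n} A \<times> Pi\<^sub>E {..<n} (\<lambda>i. A (i + n))"
    proof (intro set_eqI iffI)
      fix p assume p: "p \<in> Psi n -` Pi\<^sub>E {..<2*n} A \<inter> space (gauss n \<Otimes>\<^sub>M gauss n)"
      then have sp: "fst p \<in> PiE {..<n} (\<lambda>_. UNIV)" "snd p \<in> PiE {..<n} (\<lambda>_. UNIV)"
        by (auto simp: space_pair_measure space_gauss)
      have "fst p i \<in> A i" if "i < n" for i
        using p that by (auto simp: Psi_def PiE_def Pi_def dest!: spec[of _ i])
      moreover have "snd p i \<in> A (i + n)" if "i < n" for i
      proof -
        have "i + n < 2 * n" using that by simp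
        then show ?thesis using p that by (auto simp: Psi_def PiE_def Pi_def dest!: spec[of _ "i + n"])
      qed
      ultimately show "p \<in> Pi\<^sub>E {..<n} A \<times> Pi\<^sub>E {..<n} (\<lambda>i. A (i + n))"
        using sp by (cases p) (auto simp: PiE_def Pi_def)
    next
      fix p assume p: "p \<in> Pi\<^sub>E {..<n} A \<times> Pi\<^sub>E {..<n} (\<lambda>i. A (i + n))"
      have "Psi n p \<in> Pi\<^sub>E {..<2*n} A"
      proof -
        have "Psi n p i \<in> A i" if "i < 2 * n" for i
        proof (cases "i < n")
          case True then show ?thesis using p that by (auto simp: Psi_def PiE_def Pi_def)
        next
          case False
          then have "i - n < n" "i - n + n = i" using that by auto
          then show ?thesis using p that False by (cases p) (auto simp: Psi_def PiE_def Pi_def dest!: spec[of _ "i - n"])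
        qed
        then show ?thesis by (auto simp: Psi_def PiE_def Pi_def)
      qed
      moreover have "p \<in> space (gauss n \<Otimes>\<^sub>M gauss n)"
        using p by (cases p) (auto simp: space_pair_measure space_gauss PiE_def Pi_def)
      ultimately show "p \<in> Psi n -` Pi\<^sub>E {..<2*n} A \<inter> space (gauss n \<Otimes>\<^sub>M gauss n)" by simp
    qed
    have S1: "Pi\<^sub>E {..<n} A \<in> sets (gauss n)" using A1 by (simp add: gauss_PiM sets_PiM_I_finite)
    have S2: "Pi\<^sub>E {..<n} (\<lambda>i. A (i + n)) \<in> sets (gauss n)" using A2 by (simp add: gauss_PiM sets_PiM_I_finite)
    have S: "Pi\<^sub>E {..<2*n} A \<in> sets (gauss (2*n))" using A by (simp add: gauss_PiM sets_PiM_I_finite)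
    have "emeasure (distr (gauss n \<Otimes>\<^sub>M gauss n) (gauss (2*n)) (Psi n)) (Pi\<^sub>E {..<2*n} A)
        = emeasure (gauss n \<Otimes>\<^sub>M gauss n) (Pi\<^sub>E {..<n} A \<times> Pi\<^sub>E {..<n} (\<lambda>i. A (i + n)))"
      using S Psi_meas by (simp add: emeasure_distr pre)
    also have "\<dots> = emeasure (gauss n) (Pi\<^sub>E {..<n} A) * emeasure (gauss n) (Pi\<^sub>E {..<n} (\<lambda>i. A (i + n)))"
      using S1 S2 by (rule sf.emeasure_pair_measure_Times)
    also have "\<dots> = (\<Prod>i<n. emeasure NN (A i)) * (\<Prod>i<n. emeasure NN (A (i + n)))"
      unfolding gauss_PiM by (subst (1 2) ps.emeasure_PiM) (use A1 A2 in auto)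
    also have "\<dots> = (\<Prod>i<2*n. emeasure NN (A i))"
      by (rule prod_split_2n[symmetric])
    finally show "emeasure (distr (gauss n \<Otimes>\<^sub>M gauss n) (gauss (2*n)) (Psi n)) (Pi\<^sub>E {..<2*n} A) = (\<Prod>i<2*n. emeasure NN (A i))" .
  qed simp
  then show ?thesis by (simp add: gauss_PiM)
qed

definition Pr :: "nat \<Rightarrow> (nat \<Rightarrow> real) set \<Rightarrow> (nat \<Rightarrow> real) \<Rightarrow> (nat \<Rightarrow> real)" where
  "Pr n U x = (\<lambda>k\<in>{..<n}. \<Sum>u\<in>U. ip n u x * u k)"

definition Tm :: "nat \<Rightarrow> (nat \<Rightarrow> real) set \<Rightarrow> (nat \<Rightarrow> real) \<Rightarrow> (nat \<Rightarrow> real) \<Rightarrow> (nat \<Rightarrow> real)" where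
  "Tm n U z x = (\<lambda>k\<in>{..<n}. z k - (\<Sum>u\<in>U. ip n u z * u k) + (\<Sum>u\<in>U. ip n u x * u k))"

definition emb :: "nat \<Rightarrow> (nat \<Rightarrow> real) \<Rightarrow> (nat \<Rightarrow> real)" where
  "emb n u = (\<lambda>i\<in>{..<2*n}. if i < n then u i / sqrt 2 else - u (i - n) / sqrt 2)"

lemma sum_split_2n:
  fixes f :: "nat \<Rightarrow> real"
  shows "(\<Sum>i<2*n. f i) = (\<Sum>i<n. f i) + (\<Sum>i<n. f (i + n))"
proof -
  have "{..<2*n} = {..<n} \<union> {n..<2*n}" by auto
  then have "(\<Sum>i<2*n. f i) = (\<Sum>i<n. f i) + (\<Sum>i\<in>{n..<2*n}. f i)"
    by (simp add: sum.union_disjoint ivl_disj_int)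
  also have "(\<Sum>i\<in>{n..<2*n}. f i) = (\<Sum>i\<in>{0..<n}. f (i + n))"
    using sum.atLeastLessThan_shift_bounds[of f 0 n n] by (simp add: mult_2 o_def add.commute)
  finally show ?thesis by (simp add: atLeast0LessThan)
qed

lemma ip_emb_Psi: "ip (2*n) (emb n u) (Psi n (a, b)) = (ip n u a - ip n u b) / sqrt 2"
  unfolding ip_def
  by (subst sum_split_2n) (simp add: emb_def Psi_def sum_subtractf sum_divide_distrib[symmetric] diff_divide_distrib sum_negf)

lemma ip_emb_emb: "ip (2*n) (emb n u) (emb n v) = ip n u v"
proof -
  have "ip (2*n) (emb n u) (emb n v) = (\<Sum>i<n. u i * v i / 2) + (\<Sum>i<n. u i * v i / 2)"
    unfolding ip_def by (subst sum_split_2n) (simp add: emb_def)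
  also have "\<dots> = ip n u v" unfolding ip_def by (simp add: sum_divide_distrib[symmetric])
  finally show ?thesis .
qed

lemma emb_space: "emb n u \<in> space (gauss (2*n))"
  by (simp add: emb_def space_gauss)

lemma emb_inj: "inj_on (emb n) (space (gauss n))"
proof (rule inj_onI)
  fix u v assume u: "u \<in> space (gauss n)" and v: "v \<in> space (gauss n)" and e: "emb n u = emb n v"
  show "u = v"
  proof
    fix k show "u k = v k"
    proof (cases "k < n")
      case True
      then have "emb n u k = emb n v k" using e by simp
      then show ?thesis using True by (simp add: emb_def)
    next
      case False then show ?thesis using u v by (simp add: space_gauss PiE_def extensional_def)
    qed
  qed
qed

lemma fE_Psi:
  assumes U: "finite U" "U \<subseteq> space (gauss n)" and k: "k < n"
  shows "fE (2*n) (emb n ` U) (Psi n (z, x)) k = Tm n U z x k"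
proof -
  have inj: "inj_on (emb n) U" using emb_inj U inj_on_subset by blast
  have "fE (2*n) (emb n ` U) (Psi n (z, x)) k
      = z k - 2 * (\<Sum>u\<in>U. ip (2*n) (emb n u) (Psi n (z, x)) * emb n u k)"
    using k by (simp add: fE_def Psi_def sum.reindex[OF inj])
  also have "(\<Sum>u\<in>U. ip (2*n) (emb n u) (Psi n (z, x)) * emb n u k)
      = (\<Sum>u\<in>U. (ip n u z - ip n u x) * u k / 2)"
  proof (intro sum.cong refl)
    fix u assume "u \<in> U"
    have s2: "sqrt 2 * sqrt 2 = (2::real)" by simp
    have "ip (2*n) (emb n u) (Psi n (z, x)) * emb n u k = ((ip n u z - ip n u x) / sqrt 2) * (u k / sqrt 2)"
      using k by (simp only: ip_emb_Psi) (simp add: emb_def)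
    also have "\<dots> = (ip n u z - ip n u x) * u k / (sqrt 2 * sqrt 2)" by simp
    also have "\<dots> = (ip n u z - ip n u x) * u k / 2" by (simp only: s2)
    finally show "ip (2*n) (emb n u) (Psi n (z, x)) * emb n u k = (ip n u z - ip n u x) * u k / 2" .
  qed
  also have "z k - 2 * \<dots> = Tm n U z x k"
  proof -
    have aux: "\<And>A B C::real. C - ((2*A - 2*B)/2) = C - A + B" by (simp add: diff_divide_distrib)
    show ?thesis
      using k by (simp add: Tm_def sum_divide_distrib[symmetric] left_diff_distrib sum_subtractf aux del: minus_divide_left)
  qed
  finally show ?thesis .
qed

lemma Tm_meas: "(\<lambda>p. Tm n U (fst p) (snd p)) \<in> measurable (gauss n \<Otimes>\<^sub>M gauss n) (gauss n)"
  unfolding Tm_def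
proof (subst (2) gauss_PiM, rule measurable_restrict)
  fix k assume k: "k \<in> {..<n}"
  have c: "(\<lambda>w. w i) \<in> borel_measurable (gauss n)" if "i < n" for i using that by (rule coord_meas_gauss)
  have "(\<lambda>p. fst p k - (\<Sum>u\<in>U. ip n u (fst p) * u k) + (\<Sum>u\<in>U. ip n u (snd p) * u k)) \<in> borel_measurable (gauss n \<Otimes>\<^sub>M gauss n)"
  proof -
    have f1: "(\<lambda>p. fst p k) \<in> borel_measurable (gauss n \<Otimes>\<^sub>M gauss n)"
      using measurable_comp[OF measurable_fst c[of k]] k by (simp add: o_def)
    have f2: "(\<lambda>p. ip n u (fst p)) \<in> borel_measurable (gauss n \<Otimes>\<^sub>M gauss n)" for u
      using measurable_comp[OF measurable_fst ip_meas_gauss[of n u]] by (simp add: o_def)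
    have f3: "(\<lambda>p. ip n u (snd p)) \<in> borel_measurable (gauss n \<Otimes>\<^sub>M gauss n)" for u
      using measurable_comp[OF measurable_snd ip_meas_gauss[of n u]] by (simp add: o_def)
    show ?thesis
      by (intro borel_measurable_add borel_measurable_diff borel_measurable_sum borel_measurable_times f1 f2 f3 borel_measurable_const)
  qed
  then show "(\<lambda>p. fst p k - (\<Sum>u\<in>U. ip n u (fst p) * u k) + (\<Sum>u\<in>U. ip n u (snd p) * u k)) \<in> measurable (gauss n \<Otimes>\<^sub>M gauss n) NN"
    by (simp cong: measurable_cong_sets)
qed

lemma Tm_space: "Tm n U z x \<in> space (gauss n)"
  by (simp add: Tm_def space_gauss)

definition rs :: "nat \<Rightarrow> (nat \<Rightarrow> real) \<Rightarrow> (nat \<Rightarrow> real)" where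
  "rs n w = restrict w {..<n}"

lemma rs_meas: "rs n \<in> measurable (gauss (2*n)) (gauss n)"
  unfolding rs_def
proof (subst (2) gauss_PiM, rule measurable_restrict)
  fix k assume "k \<in> {..<n}"
  then show "(\<lambda>w. w k) \<in> measurable (gauss (2*n)) NN"
    by (intro coord_meas_gauss') auto
qed

lemma key_identity:
  assumes U: "finite U" "U \<subseteq> space (gauss n)" "\<forall>u\<in>U. ip n u u = 1"
    "\<forall>u\<in>U. \<forall>v\<in>U. u \<noteq> v \<longrightarrow> ip n u v = 0"
    and B: "B \<in> sets (gauss n)"
  shows "(\<integral>\<^sup>+z. emeasure (gauss n) {x\<in>space (gauss n). Tm n U z x \<in> B} \<partial>gauss n) = emeasure (gauss n) B"
proof -
  interpret sf: sigma_finite_measure "gauss n" by (rule sigma_finite_gauss)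
  interpret pr: prob_space "gauss n" by (rule prob_space_gauss)
  define E where "E = emb n ` U"
  have inj: "inj_on (emb n) U" by (rule inj_on_subset[OF emb_inj U(2)])
  have gF: "gp (2*n) (fE (2*n) E)"
  proof (rule fE_gp)
    show "finite E" using U by (simp add: E_def)
    show "E \<subseteq> space (gauss (2*n))" using emb_space by (auto simp: E_def)
    show "\<forall>e\<in>E. ip (2*n) e e = 1" using U by (auto simp: E_def ip_emb_emb)
    show "\<forall>e\<in>E. \<forall>e'\<in>E. e \<noteq> e' \<longrightarrow> ip (2*n) e e' = 0"
      using U by (auto simp: E_def ip_emb_emb)
  qed
  define F where "F = fE (2*n) E"
  have Fm: "F \<in> measurable (gauss (2*n)) (gauss (2*n))" and FD: "distr (gauss (2*n)) (gauss (2*n)) F = gauss (2*n)"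
    using gF unfolding gp_def F_def by auto
  define R where "R = rs n -` B \<inter> space (gauss (2*n))"
  have R: "R \<in> sets (gauss (2*n))" unfolding R_def using measurable_sets[OF rs_meas B] .
  define Q where "Q = (\<lambda>p. Tm n U (fst p) (snd p)) -` B \<inter> space (gauss n \<Otimes>\<^sub>M gauss n)"
  have Q: "Q \<in> sets (gauss n \<Otimes>\<^sub>M gauss n)" unfolding Q_def using measurable_sets[OF Tm_meas B] .
  have FPsi: "rs n (F (Psi n p)) = Tm n U (fst p) (snd p)" for p
  proof
    fix k show "rs n (F (Psi n p)) k = Tm n U (fst p) (snd p) k"
      using fE_Psi[OF U(1,2), of k "fst p" "snd p"] by (cases "k < n") (auto simp: rs_def F_def E_def Tm_def)
  qed
  have FPsi_sp: "F (Psi n p) \<in> space (gauss (2*n))" if "p \<in> space (gauss n \<Otimes>\<^sub>M gauss n)" for p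
    using measurable_space[OF Fm measurable_space[OF Psi_meas that]] .
  have QR: "Q = (F \<circ> Psi n) -` R \<inter> space (gauss n \<Otimes>\<^sub>M gauss n)"
    unfolding Q_def R_def using FPsi FPsi_sp by auto
  have PsiR: "Psi n -` R \<inter> space (gauss n \<Otimes>\<^sub>M gauss n) = B \<times> space (gauss n)"
  proof -
    have "rs n (Psi n p) = fst p" if "p \<in> space (gauss n \<Otimes>\<^sub>M gauss n)" for p
    proof
      fix k show "rs n (Psi n p) k = fst p k"
        using that by (cases "k < n") (auto simp: rs_def Psi_def space_pair_measure space_gauss PiE_def extensional_def)
    qed
    then show ?thesis
      unfolding R_def using measurable_space[OF Psi_meas] sets.sets_into_space[OF B]
      by (auto simp: space_pair_measure)
  qed
  have "emeasure (gauss n \<Otimes>\<^sub>M gauss n) Q = emeasure (distr (gauss n \<Otimes>\<^sub>M gauss n) (gauss (2*n)) (F \<circ> Psi n)) R"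
    using R measurable_comp[OF Psi_meas Fm] by (simp add: emeasure_distr QR)
  also have "\<dots> = emeasure (distr (distr (gauss n \<Otimes>\<^sub>M gauss n) (gauss (2*n)) (Psi n)) (gauss (2*n)) F) R"
    by (simp add: distr_distr[OF Fm Psi_meas])
  also have "\<dots> = emeasure (gauss (2*n)) R" by (simp add: distr_Psi FD)
  also have "\<dots> = emeasure (distr (gauss n \<Otimes>\<^sub>M gauss n) (gauss (2*n)) (Psi n)) R" by (simp add: distr_Psi)
  also have "\<dots> = emeasure (gauss n \<Otimes>\<^sub>M gauss n) (B \<times> space (gauss n))"
    using R Psi_meas by (simp add: emeasure_distr PsiR)
  also have "\<dots> = emeasure (gauss n) B * emeasure (gauss n) (space (gauss n))"
    using B by (intro sf.emeasure_pair_measure_Times) auto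
  also have "\<dots> = emeasure (gauss n) B" by (simp add: pr.emeasure_space_1)
  finally have QB: "emeasure (gauss n \<Otimes>\<^sub>M gauss n) Q = emeasure (gauss n) B" .
  have "emeasure (gauss n \<Otimes>\<^sub>M gauss n) Q = (\<integral>\<^sup>+z. emeasure (gauss n) (Pair z -` Q) \<partial>gauss n)"
    using Q by (rule sf.emeasure_pair_measure_alt)
  also have "\<dots> = (\<integral>\<^sup>+z. emeasure (gauss n) {x\<in>space (gauss n). Tm n U z x \<in> B} \<partial>gauss n)"
  proof (rule nn_integral_cong)
    fix z assume z: "z \<in> space (gauss n)"
    have "Pair z -` Q = {x\<in>space (gauss n). Tm n U z x \<in> B}"
      using z by (auto simp: Q_def space_pair_measure)
    then show "emeasure (gauss n) (Pair z -` Q) = emeasure (gauss n) {x\<in>space (gauss n). Tm n U z x \<in> B}" by simp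
  qed
  finally show ?thesis using QB by simp
qed

lemma edist_L2: "edist n x y = L2_set (\<lambda>i. x i - y i) {..<n}"
  unfolding edist_def L2_set_def ..

lemma edist_triangle: "edist n x z \<le> edist n x y + edist n y z"
proof -
  have "edist n x z = L2_set (\<lambda>i. (x i - y i) + (y i - z i)) {..<n}"
    unfolding edist_L2 by simp
  also have "\<dots> \<le> L2_set (\<lambda>i. x i - y i) {..<n} + L2_set (\<lambda>i. y i - z i) {..<n}"
    by (rule L2_set_triangle_ineq)
  finally show ?thesis unfolding edist_L2 .
qed

lemma edist_sym: "edist n x y = edist n y x"
  unfolding edist_def by (simp add: power2_commute)

lemma edist_nonneg: "0 \<le> edist n x y"
  unfolding edist_def by (simp add: sum_nonneg)

lemma edist_self: "edist n x x = 0"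
  unfolding edist_def by simp

lemma bessel:
  assumes U: "finite U" "\<forall>u\<in>U. ip n u u = 1" "\<forall>u\<in>U. \<forall>v\<in>U. u \<noteq> v \<longrightarrow> ip n u v = 0"
  shows "(\<Sum>k<n. (\<Sum>u\<in>U. ip n u d * u k)\<^sup>2) \<le> (\<Sum>k<n. (d k)\<^sup>2)"
proof -
  define c where "c u = ip n u d" for u
  define p where "p k = (\<Sum>u\<in>U. c u * u k)" for k
  have ipuw: "ip n u w = (if u = w then 1 else 0)" if "u \<in> U" "w \<in> U" for u w
    using U that by auto
  have pp: "(\<Sum>k<n. (p k)\<^sup>2) = (\<Sum>u\<in>U. (c u)\<^sup>2)"
  proof -
    have "(\<Sum>k<n. (p k)\<^sup>2) = (\<Sum>k<n. \<Sum>u\<in>U. \<Sum>w\<in>U. c u * c w * (u k * w k))"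
      unfolding p_def power2_eq_square by (simp add: sum_product algebra_simps)
    also have "\<dots> = (\<Sum>u\<in>U. \<Sum>w\<in>U. c u * c w * ip n u w)"
      unfolding ip_def by (simp add: sum.swap[of _ "{..<n}"] sum_distrib_left)
    also have "\<dots> = (\<Sum>u\<in>U. \<Sum>w\<in>U. if u = w then c u * c w else 0)"
      by (intro sum.cong refl) (simp add: ipuw)
    also have "\<dots> = (\<Sum>u\<in>U. (c u)\<^sup>2)"
      using U(1) by (simp add: power2_eq_square)
    finally show ?thesis .
  qed
  have dp: "(\<Sum>k<n. d k * p k) = (\<Sum>u\<in>U. (c u)\<^sup>2)"
  proof -
    have "(\<Sum>k<n. d k * p k) = (\<Sum>k<n. \<Sum>u\<in>U. c u * (u k * d k))"
      unfolding p_def by (simp add: sum_distrib_left algebra_simps)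
    also have "\<dots> = (\<Sum>u\<in>U. c u * ip n u d)"
      unfolding ip_def by (simp add: sum.swap[of _ "{..<n}"] sum_distrib_left)
    also have "\<dots> = (\<Sum>u\<in>U. (c u)\<^sup>2)" by (simp add: c_def power2_eq_square)
    finally show ?thesis .
  qed
  have "0 \<le> (\<Sum>k<n. (d k - p k)\<^sup>2)" by (simp add: sum_nonneg)
  also have "\<dots> = (\<Sum>k<n. (d k)\<^sup>2) - 2 * (\<Sum>k<n. d k * p k) + (\<Sum>k<n. (p k)\<^sup>2)"
    by (simp add: power2_diff sum.distrib sum_subtractf sum_distrib_left algebra_simps)
  finally have "(\<Sum>k<n. (p k)\<^sup>2) \<le> (\<Sum>k<n. (d k)\<^sup>2)" using pp dp by simp
  then show ?thesis unfolding p_def c_def .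
qed

lemma Tm_lip:
  assumes U: "finite U" "\<forall>u\<in>U. ip n u u = 1" "\<forall>u\<in>U. \<forall>v\<in>U. u \<noteq> v \<longrightarrow> ip n u v = 0"
  shows "edist n (Tm n U z x) (Tm n U z y) \<le> edist n x y"
proof -
  define d where "d i = x i - y i" for i
  have ipd: "ip n u x - ip n u y = ip n u d" for u
    unfolding ip_def d_def by (simp add: sum_subtractf algebra_simps)
  have "(\<Sum>k<n. (Tm n U z x k - Tm n U z y k)\<^sup>2) = (\<Sum>k<n. (\<Sum>u\<in>U. ip n u d * u k)\<^sup>2)"
  proof (intro sum.cong refl)
    fix k assume "k \<in> {..<n}"
    then have "Tm n U z x k - Tm n U z y k = (\<Sum>u\<in>U. (ip n u x - ip n u y) * u k)"
      by (simp add: Tm_def sum_subtractf left_diff_distrib)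
    then show "(Tm n U z x k - Tm n U z y k)\<^sup>2 = (\<Sum>u\<in>U. ip n u d * u k)\<^sup>2" by (simp add: ipd)
  qed
  also have "\<dots> \<le> (\<Sum>k<n. (d k)\<^sup>2)" by (rule bessel[OF U])
  finally show ?thesis unfolding edist_def d_def by simp
qed

definition Qv :: "nat \<Rightarrow> (nat \<Rightarrow> real) set" where
  "Qv n = PiE {..<n} (\<lambda>_. \<rat>)"

lemma countable_Qv: "countable (Qv n)"
  unfolding Qv_def by (intro countable_PiE countable_rat) auto

lemma rat_approx:
  assumes "\<eta> > 0"
  shows "\<exists>q\<in>Qv n. edist n x q < \<eta>"
proof -
  define \<eta>' where "\<eta>' = \<eta> / (real n + 1)"
  have \<eta>': "\<eta>' > 0" using assms by (simp add: \<eta>'_def)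
  have "\<forall>i. \<exists>r. r \<in> \<rat> \<and> x i - \<eta>' < r \<and> r < x i + \<eta>'"
    using Rats_dense_in_real \<eta>' by (metis add.commute diff_less_eq less_add_same_cancel2 less_trans)
  then obtain r where r: "\<And>i. r i \<in> \<rat>" "\<And>i. x i - \<eta>' < r i" "\<And>i. r i < x i + \<eta>'"
    by metis
  define q where "q = (\<lambda>i\<in>{..<n}. r i)"
  have q: "q \<in> Qv n" using r(1) by (simp add: q_def Qv_def)
  have "edist n x q \<le> (\<Sum>i<n. \<bar>x i - q i\<bar>)"
    unfolding edist_L2 by (rule L2_set_le_sum_abs)
  also have "\<dots> \<le> (\<Sum>i<n. \<eta>')"
  proof (intro sum_mono)
    fix i assume i: "i \<in> {..<n}"
    have "x i - \<eta>' < r i" "r i < x i + \<eta>'" using r(2)[of i] r(3)[of i] .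
    then show "\<bar>x i - q i\<bar> \<le> \<eta>'" using i unfolding q_def by (simp add: abs_le_iff)
  qed
  also have "\<dots> = real n * \<eta>'" by simp
  also have "\<dots> < \<eta>" using assms by (simp add: \<eta>'_def field_simps)
  finally show ?thesis using q by blast
qed

lemma edist_meas: "(\<lambda>x. edist n x q) \<in> borel_measurable (gauss n)"
proof -
  have "(\<lambda>x. (\<Sum>i<n. (x i - q i)\<^sup>2)) \<in> borel_measurable (gauss n)"
    by (intro borel_measurable_sum borel_measurable_power borel_measurable_diff
      coord_meas_gauss borel_measurable_const) auto
  then show ?thesis unfolding edist_def by measurable
qed

lemma inf_le_iff:
  assumes A: "A \<noteq> {}"
  shows "(INF a\<in>A. edist n x a) \<le> \<delta> \<longleftrightarrow>
    (\<forall>m::nat. \<exists>q\<in>Qv n. edist n x q < 1 / (real m + 1) \<and> (\<exists>a\<in>A. edist n q a < \<delta> + 2 / (real m + 1)))"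
proof -
  have bdd: "bdd_below ((\<lambda>a. edist n x a) ` A)" by (intro bdd_belowI[of _ 0]) (auto simp: edist_nonneg)
  show ?thesis
  proof
    assume le: "(INF a\<in>A. edist n x a) \<le> \<delta>"
    show "\<forall>m::nat. \<exists>q\<in>Qv n. edist n x q < 1 / (real m + 1) \<and> (\<exists>a\<in>A. edist n q a < \<delta> + 2 / (real m + 1))"
    proof
      fix m :: nat
      have pos: "1 / (real m + 1) > 0" by simp
      have "(INF a\<in>A. edist n x a) < \<delta> + 1 / (real m + 1)" using le pos by linarith
      then obtain a where a: "a \<in> A" "edist n x a < \<delta> + 1 / (real m + 1)"
        using cINF_less_iff[OF A bdd] by blast
      obtain q where q: "q \<in> Qv n" "edist n x q < 1 / (real m + 1)" using rat_approx[OF pos] by blast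
      have "edist n q a \<le> edist n q x + edist n x a" by (rule edist_triangle)
      also have "\<dots> < \<delta> + 2 / (real m + 1)" using a q by (simp add: edist_sym)
      finally show "\<exists>q\<in>Qv n. edist n x q < 1 / (real m + 1) \<and> (\<exists>a\<in>A. edist n q a < \<delta> + 2 / (real m + 1))"
        using q a by blast
    qed
  next
    assume H: "\<forall>m::nat. \<exists>q\<in>Qv n. edist n x q < 1 / (real m + 1) \<and> (\<exists>a\<in>A. edist n q a < \<delta> + 2 / (real m + 1))"
    show "(INF a\<in>A. edist n x a) \<le> \<delta>"
    proof (rule ccontr)
      assume "\<not> (INF a\<in>A. edist n x a) \<le> \<delta>"
      then have gap: "(INF a\<in>A. edist n x a) - \<delta> > 0" by simp
      obtain m :: nat where m: "inverse (real (Suc m)) < ((INF a\<in>A. edist n x a) - \<delta>) / 3"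
        using reals_Archimedean[of "((INF a\<in>A. edist n x a) - \<delta>) / 3"] gap by auto
      obtain q a where qa: "edist n x q < 1 / (real m + 1)" "a \<in> A" "edist n q a < \<delta> + 2 / (real m + 1)"
        using H by blast
      have "(INF a\<in>A. edist n x a) \<le> edist n x a" by (rule cINF_lower[OF bdd qa(2)])
      also have "\<dots> \<le> edist n x q + edist n q a" by (rule edist_triangle)
      also have "\<dots> < \<delta> + 3 / (real m + 1)" using qa by simp
      finally have "(INF a\<in>A. edist n x a) - \<delta> < 3 / (real m + 1)" by simp
      moreover have "3 / (real m + 1) < (INF a\<in>A. edist n x a) - \<delta>"
        using m by (simp add: inverse_eq_divide field_simps)
      ultimately show False by simp
    qed
  qed
qed

lemma nbhd_sets: "nbhd n A \<delta> \<in> sets (gauss n)"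
proof (cases "A = {}")
  case True
  then show ?thesis by (simp add: nbhd_def)
next
  case False
  define S where "S m = {q\<in>Qv n. \<exists>a\<in>A. edist n q a < \<delta> + 2 / (real m + 1)}" for m :: nat
  have eq: "nbhd n A \<delta> = (\<Inter>m. \<Union>q\<in>S m. {x\<in>space (gauss n). edist n x q < 1 / (real m + 1)})"
    using False unfolding nbhd_def S_def by (force simp: inf_le_iff[OF False])
  have "(\<Union>q\<in>S m. {x\<in>space (gauss n). edist n x q < 1 / (real m + 1)}) \<in> sets (gauss n)" for m
  proof (rule sets.countable_UN'')
    show "countable (S m)" unfolding S_def by (rule countable_subset[OF _ countable_Qv]) auto
    fix q show "{x\<in>space (gauss n). edist n x q < 1 / (real m + 1)} \<in> sets (gauss n)"
      using edist_meas[of n q] by measurable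
  qed
  then show ?thesis unfolding eq by (intro sets.countable_INT) auto
qed

lemma liminf_transfer:
  fixes f :: "real \<Rightarrow> real" and v :: "nat \<Rightarrow> real" and d :: "nat \<Rightarrow> real" and C :: real
  assumes d: "\<And>m. 0 < d m \<and> d m < 1 / (real m + 1)"
    and fv: "\<And>m. f (d m) \<le> v m"
    and lim: "liminf (\<lambda>m. ennreal (v m)) \<le> ennreal C" and C: "C \<ge> 0"
  shows "Liminf (at_right 0) (\<lambda>\<delta>. ereal (f \<delta>)) \<le> ereal C"
proof (rule ccontr)
  let ?L = "Liminf (at_right (0::real)) (\<lambda>\<delta>. ereal (f \<delta>))"
  assume "\<not> ?L \<le> ereal C"
  then have "ereal C < ?L" by simp
  then obtain y where y: "ereal C < ereal y" "ereal y < ?L" using ereal_dense2 by blast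
  have "eventually (\<lambda>\<delta>. ereal y < ereal (f \<delta>)) (at_right 0)"
    using y(2) le_Liminf_iff[of ?L "at_right 0" "\<lambda>\<delta>. ereal (f \<delta>)"] by auto
  then obtain b where b: "b > 0" "\<And>\<delta>. \<delta> > 0 \<Longrightarrow> \<delta> < b \<Longrightarrow> y < f \<delta>"
    unfolding eventually_at_right_field by auto
  define w where "w = (C + y) / 2"
  have Cy: "C < y" using y(1) by simp
  have w: "C < w" "w < y" using Cy by (auto simp: w_def)
  have "\<not> eventually (\<lambda>m. ennreal w \<le> ennreal (v m)) sequentially"
  proof
    assume "eventually (\<lambda>m. ennreal w \<le> ennreal (v m)) sequentially"
    then have "ennreal w \<le> liminf (\<lambda>m. ennreal (v m))" by (rule Liminf_bounded)
    also have "\<dots> \<le> ennreal C" by (rule lim)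
    finally show False using w C by (simp add: ennreal_le_iff2)
  qed
  then have "frequently (\<lambda>m. ennreal (v m) < ennreal w) sequentially"
    by (simp add: not_eventually not_le)
  then have fr: "\<forall>N. \<exists>m\<ge>N. ennreal (v m) < ennreal w" by (simp add: frequently_sequentially)
  obtain N :: nat where N: "inverse (real (Suc N)) < b" using reals_Archimedean[OF b(1)] by blast
  obtain m where m: "m \<ge> N" "ennreal (v m) < ennreal w" using fr by blast
  have vw: "v m < w"
  proof (cases "v m \<ge> 0")
    case True then show ?thesis using m(2) by (meson ennreal_leI not_le)
  next
    case False then show ?thesis using w C by simp
  qed
  have "d m < 1 / (real m + 1)" using d by blast
  also have "\<dots> \<le> 1 / (real N + 1)" using m(1) by (simp add: frac_le)
  also have "\<dots> < b" using N by (simp add: inverse_eq_divide add.commute)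
  finally have "y < f (d m)" using b(2) d by blast
  then show False using fv[of m] vw w by simp
qed

lemma choose_seq:
  fixes r :: "real \<Rightarrow> real"
  assumes L: "Liminf (at_right 0) (\<lambda>\<delta>. ereal (r \<delta>)) \<le> ereal s"
  shows "\<exists>d. \<forall>m. 0 < d m \<and> d m < 1 / (real m + 1) \<and> r (d m) < s + 1 / (real m + 1)"
proof -
  have "\<exists>\<delta>. 0 < \<delta> \<and> \<delta> < 1 / (real m + 1) \<and> r \<delta> < s + 1 / (real m + 1)" for m :: nat
  proof -
    have pos: "1 / (real m + 1) > 0" by simp
    have "\<not> ereal (s + 1 / (real m + 1)) \<le> Liminf (at_right 0) (\<lambda>\<delta>. ereal (r \<delta>))"
      using L pos by (metis ereal_less_eq(3) less_add_same_cancel1 order.trans linorder_not_le)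
    then obtain y where y: "y < ereal (s + 1 / (real m + 1))" "\<not> eventually (\<lambda>\<delta>. y < ereal (r \<delta>)) (at_right 0)"
      unfolding le_Liminf_iff by auto
    from y(2) have "\<forall>b>0. \<exists>\<delta>>0. \<delta> < b \<and> \<not> y < ereal (r \<delta>)"
      unfolding eventually_at_right_field by auto
    then obtain \<delta> where \<delta>: "\<delta> > 0" "\<delta> < 1 / (real m + 1)" "\<not> y < ereal (r \<delta>)" using pos by blast
    then have "ereal (r \<delta>) < ereal (s + 1 / (real m + 1))" using y(1) by (meson not_less less_le_trans)
    then show ?thesis using \<delta> by auto
  qed
  then show ?thesis by metis
qed

lemma markov_select:
  fixes M :: "'a measure" and F D :: "'a \<Rightarrow> ennreal"
  assumes P: "prob_space M" and Fm: "F \<in> borel_measurable M" and Dm: "D \<in> borel_measurable M"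
    and IF: "(\<integral>\<^sup>+z. F z \<partial>M) \<le> ennreal s" and ID: "(\<integral>\<^sup>+z. D z \<partial>M) \<le> ennreal (2 * \<epsilon>)"
    and s: "s \<ge> 0" and e: "0 < \<epsilon>" "\<epsilon> \<le> 1"
  shows "\<exists>z\<in>space M. F z \<le> ennreal (s * (1 + sqrt \<epsilon>)) \<and> D z \<le> ennreal (5 * sqrt \<epsilon>)"
proof (rule ccontr)
  interpret prob_space M by (rule P)
  define t where "t = sqrt \<epsilon>"
  have t: "0 < t" "t \<le> 1" "t * t = \<epsilon>" using e by (auto simp: t_def)
  define a where "a = s * (1 + t)"
  define b where "b = 5 * t"
  have ab: "a \<ge> 0" "b > 0" using s t by (auto simp: a_def b_def)
  assume "\<not> ?thesis"
  then have H: "\<And>z. z \<in> space M \<Longrightarrow> ennreal a < F z \<or> ennreal b < D z"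
    unfolding a_def b_def t_def by (auto simp: not_le)
  show False
  proof (cases "s = 0")
    case True
    then have "(\<integral>\<^sup>+z. F z \<partial>M) = 0" using IF by simp
    then have "AE z in M. F z = 0" using Fm by (simp add: nn_integral_0_iff_AE)
    from this AE_space have "AE z in M. ennreal b \<le> D z"
    proof eventually_elim
      case (elim z)
      then show ?case using H[of z] True by (auto simp: a_def)
    qed
    then have "(\<integral>\<^sup>+z. ennreal b \<partial>M) \<le> (\<integral>\<^sup>+z. D z \<partial>M)" by (rule nn_integral_mono_AE)
    then have "ennreal b \<le> ennreal (2 * \<epsilon>)" using ID by (simp add: emeasure_space_1)
    then have "b \<le> 2 * \<epsilon>" using e by (simp add: ennreal_le_iff)
    then have "5 * t \<le> 2 * (t * t)" using t by (simp add: b_def)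
    then have "5 \<le> 2 * t" using t(1) by (simp add: mult.assoc[symmetric] mult_le_cancel_right)
    then show False using t by simp
  next
    case False
    then have sp: "s > 0" using s by simp
    have pw: "ennreal (a * b) \<le> ennreal b * F z + ennreal a * D z" if z: "z \<in> space M" for z
    proof (cases "ennreal a < F z")
      case True
      have "ennreal (a * b) = ennreal b * ennreal a" using ab by (simp add: ennreal_mult mult.commute)
      also have "\<dots> \<le> ennreal b * F z" using True by (intro mult_left_mono) auto
      also have "\<dots> \<le> ennreal b * F z + ennreal a * D z" by simp
      finally show ?thesis .
    next
      case False
      then have "ennreal b < D z" using H[OF z] by simp
      have "ennreal (a * b) = ennreal a * ennreal b" using ab by (simp add: ennreal_mult)
      also have "\<dots> \<le> ennreal a * D z" using \<open>ennreal b < D z\<close> by (intro mult_left_mono) auto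
      also have "\<dots> \<le> ennreal b * F z + ennreal a * D z" by simp
      finally show ?thesis .
    qed
    have "ennreal (a * b) = (\<integral>\<^sup>+z. ennreal (a * b) \<partial>M)" by (simp add: emeasure_space_1)
    also have "\<dots> \<le> (\<integral>\<^sup>+z. ennreal b * F z + ennreal a * D z \<partial>M)"
      using pw by (intro nn_integral_mono) auto
    also have "\<dots> = ennreal b * (\<integral>\<^sup>+z. F z \<partial>M) + ennreal a * (\<integral>\<^sup>+z. D z \<partial>M)"
      using Fm Dm by (simp add: nn_integral_add nn_integral_cmult)
    also have "\<dots> \<le> ennreal b * ennreal s + ennreal a * ennreal (2 * \<epsilon>)"
      using IF ID by (intro add_mono mult_left_mono) auto
    also have "\<dots> = ennreal (b * s + a * (2 * \<epsilon>))"
      using ab s e by (simp add: ennreal_mult ennreal_plus)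
    finally have "a * b \<le> b * s + a * (2 * \<epsilon>)"
      using ab s e by (subst (asm) ennreal_le_iff) auto
    then have "5 * t * s * (1 + t) \<le> 5 * t * s + s * (1 + t) * (2 * (t * t))"
      using t by (simp add: a_def b_def mult.commute mult.left_commute)
    then have "5 * (s * t * t) \<le> (2 * (1 + t)) * (s * t * t)"
      by (simp add: algebra_simps)
    moreover have "s * t * t > 0" using sp t by simp
    ultimately have "5 \<le> 2 * (1 + t)" by (meson mult_le_cancel_right_pos)
    then show False using t by simp
  qed
qed

lemma gsurf_nonneg: "0 \<le> gsurf_set n A"
  unfolding gsurf_set_def
proof (rule Liminf_bounded)
  show "\<forall>\<^sub>F \<delta> in at_right 0. 0 \<le> ereal (measure (gauss n) (nbhd n A \<delta> - A) / \<delta>)"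
    using eventually_at_right_less[of "0::real"] by eventually_elim simp
qed

lemma orth_sum:
  assumes U: "finite U" "\<forall>u\<in>U. ip n u u = 1" "\<forall>u\<in>U. \<forall>v\<in>U. u \<noteq> v \<longrightarrow> ip n u v = 0" and u: "u \<in> U"
  shows "(\<Sum>v\<in>U. c v * ip n u v) = c u"
proof -
  have "(\<Sum>v\<in>U. c v * ip n u v) = c u * ip n u u + (\<Sum>v\<in>U - {u}. c v * ip n u v)"
    using U(1) u by (simp add: sum.remove)
  also have "(\<Sum>v\<in>U - {u}. c v * ip n u v) = 0" using U u by (intro sum.neutral) auto
  finally show ?thesis using U u by simp
qed

lemma Tm_ip:
  assumes U: "finite U" "\<forall>u\<in>U. ip n u u = 1" "\<forall>u\<in>U. \<forall>v\<in>U. u \<noteq> v \<longrightarrow> ip n u v = 0" and u: "u \<in> U"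
  shows "ip n u (Tm n U z x) = ip n u x"
proof -
  have "ip n u (Tm n U z x) = ip n u z - (\<Sum>v\<in>U. ip n v z * ip n u v) + (\<Sum>v\<in>U. ip n v x * ip n u v)"
  proof -
    have "ip n u (Tm n U z x) = (\<Sum>i<n. u i * z i - (\<Sum>v\<in>U. ip n v z * (u i * v i)) + (\<Sum>v\<in>U. ip n v x * (u i * v i)))"
      unfolding ip_def Tm_def by (intro sum.cong refl) (simp add: algebra_simps sum_distrib_left)
    also have "\<dots> = (\<Sum>i<n. u i * z i) - (\<Sum>i<n. \<Sum>v\<in>U. ip n v z * (u i * v i)) + (\<Sum>i<n. \<Sum>v\<in>U. ip n v x * (u i * v i))"
      by (simp add: sum.distrib sum_subtractf)
    also have "(\<Sum>i<n. \<Sum>v\<in>U. ip n v z * (u i * v i)) = (\<Sum>v\<in>U. ip n v z * ip n u v)"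
      unfolding ip_def by (subst sum.swap) (simp add: sum_distrib_left)
    also have "(\<Sum>i<n. \<Sum>v\<in>U. ip n v x * (u i * v i)) = (\<Sum>v\<in>U. ip n v x * ip n u v)"
      unfolding ip_def by (subst sum.swap) (simp add: sum_distrib_left)
    finally show ?thesis unfolding ip_def by simp
  qed
  also have "\<dots> = ip n u x" using orth_sum[OF U u] by simp
  finally show ?thesis .
qed

lemma Tm_meas1: "z \<in> space (gauss n) \<Longrightarrow> Tm n U z \<in> measurable (gauss n) (gauss n)"
  using measurable_comp[OF measurable_Pair1'[of z "gauss n" "gauss n"] Tm_meas[of n U]] by (simp add: o_def)

lemma nbhd_subset_space: "nbhd n A \<delta> \<subseteq> space (gauss n)"
  unfolding nbhd_def by auto

lemma nbhd_Tm_subset: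
  fixes z :: "nat \<Rightarrow> real"
  assumes U: "finite U" "\<forall>u\<in>U. ip n u u = 1" "\<forall>u\<in>U. \<forall>v\<in>U. u \<noteq> v \<longrightarrow> ip n u v = 0"
    and A: "A \<subseteq> space (gauss n)"
  defines "A' \<equiv> {x\<in>space (gauss n). Tm n U z x \<in> A}"
  shows "nbhd n A' \<delta> - A' \<subseteq> {x\<in>space (gauss n). Tm n U z x \<in> nbhd n A \<delta> - A}"
proof
  fix x assume x: "x \<in> nbhd n A' \<delta> - A'"
  then have xs: "x \<in> space (gauss n)" and ne: "A' \<noteq> {}" and le: "(INF a\<in>A'. edist n x a) \<le> \<delta>" and nx: "x \<notin> A'"
    by (auto simp: nbhd_def)
  have neA: "A \<noteq> {}" using ne by (auto simp: A'_def)
  have bdd: "bdd_below ((\<lambda>a. edist n (Tm n U z x) a) ` A)" by (intro bdd_belowI[of _ 0]) (auto simp: edist_nonneg)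
  have "(INF a\<in>A. edist n (Tm n U z x) a) \<le> (INF a\<in>A'. edist n x a)"
  proof (rule cINF_greatest[OF ne])
    fix a' assume a': "a' \<in> A'"
    then have "Tm n U z a' \<in> A" by (simp add: A'_def)
    then have "(INF a\<in>A. edist n (Tm n U z x) a) \<le> edist n (Tm n U z x) (Tm n U z a')"
      by (rule cINF_lower[OF bdd])
    also have "\<dots> \<le> edist n x a'" by (rule Tm_lip[OF U])
    finally show "(INF a\<in>A. edist n (Tm n U z x) a) \<le> edist n x a'" .
  qed
  then have "(INF a\<in>A. edist n (Tm n U z x) a) \<le> \<delta>" using le by simp
  moreover have "Tm n U z x \<notin> A" using nx xs by (simp add: A'_def)
  ultimately show "x \<in> {x\<in>space (gauss n). Tm n U z x \<in> nbhd n A \<delta> - A}"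
    using xs neA Tm_space[of n U z x] by (simp add: nbhd_def)
qed

lemma emeasure_Tm_meas:
  assumes B: "B \<in> sets (gauss n)"
  shows "(\<lambda>z. emeasure (gauss n) {x\<in>space (gauss n). Tm n U z x \<in> B}) \<in> borel_measurable (gauss n)"
proof -
  interpret sf: sigma_finite_measure "gauss n" by (rule sigma_finite_gauss)
  define Q where "Q = (\<lambda>p. Tm n U (fst p) (snd p)) -` B \<inter> space (gauss n \<Otimes>\<^sub>M gauss n)"
  have Q: "Q \<in> sets (gauss n \<Otimes>\<^sub>M gauss n)" unfolding Q_def using measurable_sets[OF Tm_meas B] .
  have "(\<lambda>z. emeasure (gauss n) (Pair z -` Q)) \<in> borel_measurable (gauss n)"
    by (rule sf.measurable_emeasure_Pair[OF Q])
  then show ?thesis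
  proof (rule measurable_cong[THEN iffD1, rotated])
    fix z assume z: "z \<in> space (gauss n)"
    have "Pair z -` Q = {x\<in>space (gauss n). Tm n U z x \<in> B}"
      using z by (auto simp: Q_def space_pair_measure)
    then show "emeasure (gauss n) (Pair z -` Q) = emeasure (gauss n) {x\<in>space (gauss n). Tm n U z x \<in> B}" by simp
  qed
qed

lemma neq_sets:
  fixes f g :: "'a \<Rightarrow> real"
  assumes [measurable]: "f \<in> borel_measurable M" "g \<in> borel_measurable M"
  shows "{x\<in>space M. f x \<noteq> g x} \<in> sets M"
proof -
  have [measurable]: "(\<lambda>x. f x - g x) \<in> borel_measurable M" by measurable
  have "{x\<in>space M. f x - g x \<noteq> 0} \<in> sets M" by measurable
  moreover have "{x\<in>space M. f x - g x \<noteq> 0} = {x\<in>space M. f x \<noteq> g x}" by auto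
  ultimately show ?thesis by simp
qed

lemma main_small:
  fixes n k :: nat and s \<epsilon> :: real and f g h :: "(nat \<Rightarrow> real) \<Rightarrow> real"
  assumes bf: "boolean_fun n f" and e: "0 < \<epsilon>" "\<epsilon> \<le> 1"
    and bg: "boolean_fun n g" and jg: "linear_junta n k g"
    and bh: "boolean_fun n h" and sh: "surf n h \<le> ereal s"
    and cg: "eps_close n \<epsilon> g f" and ch: "eps_close n \<epsilon> h f"
  shows "\<exists>h'. boolean_fun n h' \<and> linear_junta n k h' \<and>
       surf n h' \<le> ereal (s * (1 + sqrt \<epsilon>)) \<and> eps_close n (6 * sqrt \<epsilon>) h' f"
proof -
  interpret pr: prob_space "gauss n" by (rule prob_space_gauss)
  obtain U G where U: "finite U" "card U \<le> k" "U \<subseteq> space (gauss n)" "\<forall>u\<in>U. ip n u u = 1"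
      "\<forall>u\<in>U. \<forall>v\<in>U. u \<noteq> v \<longrightarrow> ip n u v = 0" and gG: "\<forall>x\<in>space (gauss n). g x = G (\<lambda>u\<in>U. ip n u x)"
    using jg unfolding linear_junta_def by blast
  have Uo: "finite U" "\<forall>u\<in>U. ip n u u = 1" "\<forall>u\<in>U. \<forall>v\<in>U. u \<noteq> v \<longrightarrow> ip n u v = 0" using U by auto
  have fm[measurable]: "f \<in> borel_measurable (gauss n)" using bf by (simp add: boolean_fun_def)
  have gm[measurable]: "g \<in> borel_measurable (gauss n)" using bg by (simp add: boolean_fun_def)
  have hm[measurable]: "h \<in> borel_measurable (gauss n)" using bh by (simp add: boolean_fun_def)
  have hv: "\<forall>x\<in>space (gauss n). h x \<in> {-1, 1}" using bh by (simp add: boolean_fun_def)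
  define A where "A = {x\<in>space (gauss n). h x = 1}"
  have Asets: "A \<in> sets (gauss n)" unfolding A_def by measurable
  have Asp: "A \<subseteq> space (gauss n)" unfolding A_def by auto
  define r where "r \<delta> = measure (gauss n) (nbhd n A \<delta> - A) / \<delta>" for \<delta>
  have Lr: "Liminf (at_right 0) (\<lambda>\<delta>. ereal (r \<delta>)) \<le> ereal s"
    using sh unfolding surf_def gsurf_set_def r_def A_def .
  have "(0::ereal) \<le> ereal s"
    using gsurf_nonneg[of n A] sh unfolding surf_def A_def by (rule order.trans)
  then have s0: "s \<ge> 0" by simp
  obtain d where d: "\<And>m. 0 < d m \<and> d m < 1 / (real m + 1) \<and> r (d m) < s + 1 / (real m + 1)"
    using choose_seq[OF Lr] by blast
  define B where "B m = nbhd n A (d m) - A" for m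
  have Bsets: "B m \<in> sets (gauss n)" for m unfolding B_def using nbhd_sets Asets by blast
  define v where "v m z = measure (gauss n) {x\<in>space (gauss n). Tm n U z x \<in> B m} / d m" for m z
  define u where "u m z = ennreal (v m z)" for m z
  have um: "u m \<in> borel_measurable (gauss n)" for m
  proof -
    have "(\<lambda>z. enn2real (emeasure (gauss n) {x\<in>space (gauss n). Tm n U z x \<in> B m}) / d m) \<in> borel_measurable (gauss n)"
      using emeasure_Tm_meas[OF Bsets, of U m] by measurable
    then show ?thesis unfolding u_def v_def by (simp add: measure_def)
  qed
  have Iu: "(\<integral>\<^sup>+z. u m z \<partial>gauss n) = ennreal (r (d m))" for m
  proof -
    have dm: "d m > 0" using d by blast
    have "(\<integral>\<^sup>+z. u m z \<partial>gauss n) = (\<integral>\<^sup>+z. ennreal (1 / d m) * emeasure (gauss n) {x\<in>space (gauss n). Tm n U z x \<in> B m} \<partial>gauss n)"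
      using dm by (intro nn_integral_cong) (simp add: u_def v_def pr.emeasure_eq_measure ennreal_mult'[symmetric] mult.commute)
    also have "\<dots> = ennreal (1 / d m) * (\<integral>\<^sup>+z. emeasure (gauss n) {x\<in>space (gauss n). Tm n U z x \<in> B m} \<partial>gauss n)"
      using emeasure_Tm_meas[OF Bsets, of U m] by (simp add: nn_integral_cmult)
    also have "\<dots> = ennreal (1 / d m) * emeasure (gauss n) (B m)"
      using key_identity[OF U(1) U(3) U(4) U(5) Bsets] by simp
    also have "\<dots> = ennreal (r (d m))"
      using dm by (simp add: r_def B_def pr.emeasure_eq_measure ennreal_mult'[symmetric])
    finally show ?thesis .
  qed
  have liminf_s: "liminf (\<lambda>m. \<integral>\<^sup>+z. u m z \<partial>gauss n) \<le> ennreal s"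
  proof -
    have "liminf (\<lambda>m. \<integral>\<^sup>+z. u m z \<partial>gauss n) \<le> liminf (\<lambda>m. ennreal (s + 1 / (real m + 1)))"
      unfolding Iu by (intro Liminf_mono always_eventually allI ennreal_leI) (use d in \<open>simp add: less_imp_le\<close>)
    also have "\<dots> = ennreal s"
    proof (rule lim_imp_Liminf)
      show "\<not> trivial_limit (sequentially :: nat filter)" by simp
      have "(\<lambda>m. s + inverse (real (Suc m))) \<longlonglongrightarrow> s + 0"
        by (intro tendsto_add tendsto_const LIMSEQ_inverse_real_of_nat)
      then have "(\<lambda>m. s + 1 / (real m + 1)) \<longlonglongrightarrow> s"
        by (simp add: inverse_eq_divide add.commute)
      then show "(\<lambda>m. ennreal (s + 1 / (real m + 1))) \<longlonglongrightarrow> ennreal s"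
        by (rule tendsto_ennrealI)
    qed
    finally show ?thesis .
  qed
  define FF where "FF z = liminf (\<lambda>m. u m z)" for z
  have FFm: "FF \<in> borel_measurable (gauss n)" unfolding FF_def using um by (rule borel_measurable_liminf)
  have IFF: "(\<integral>\<^sup>+z. FF z \<partial>gauss n) \<le> ennreal s"
    unfolding FF_def using nn_integral_liminf[OF um] liminf_s by (rule order_trans)
  define Bhg where "Bhg = {x\<in>space (gauss n). h x \<noteq> g x}"
  have Bhg: "Bhg \<in> sets (gauss n)" unfolding Bhg_def by (rule neq_sets[OF hm gm])
  define DD where "DD z = emeasure (gauss n) {x\<in>space (gauss n). Tm n U z x \<in> Bhg}" for z
  have DDm: "DD \<in> borel_measurable (gauss n)" unfolding DD_def by (rule emeasure_Tm_meas[OF Bhg])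
  have hf: "{x\<in>space (gauss n). h x \<noteq> f x} \<in> sets (gauss n)" by (rule neq_sets[OF hm fm])
  have gf: "{x\<in>space (gauss n). g x \<noteq> f x} \<in> sets (gauss n)" by (rule neq_sets[OF gm fm])
  have mBhg: "measure (gauss n) Bhg \<le> 2 * \<epsilon>"
  proof -
    have "measure (gauss n) Bhg \<le> measure (gauss n) ({x\<in>space (gauss n). h x \<noteq> f x} \<union> {x\<in>space (gauss n). g x \<noteq> f x})"
      using hf gf by (intro pr.finite_measure_mono) (auto simp: Bhg_def)
    also have "\<dots> \<le> measure (gauss n) {x\<in>space (gauss n). h x \<noteq> f x} + measure (gauss n) {x\<in>space (gauss n). g x \<noteq> f x}"
      using hf gf by (rule measure_Un_le)
    also have "\<dots> \<le> 2 * \<epsilon>" using cg ch unfolding eps_close_def by simp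
    finally show ?thesis .
  qed
  have IDD: "(\<integral>\<^sup>+z. DD z \<partial>gauss n) \<le> ennreal (2 * \<epsilon>)"
  proof -
    have "(\<integral>\<^sup>+z. DD z \<partial>gauss n) = emeasure (gauss n) Bhg"
      unfolding DD_def using key_identity[OF U(1) U(3) U(4) U(5) Bhg] .
    also have "\<dots> = ennreal (measure (gauss n) Bhg)" by (simp add: pr.emeasure_eq_measure)
    also have "\<dots> \<le> ennreal (2 * \<epsilon>)" using mBhg by (rule ennreal_leI)
    finally show ?thesis .
  qed
  obtain z where z: "z \<in> space (gauss n)" "FF z \<le> ennreal (s * (1 + sqrt \<epsilon>))" "DD z \<le> ennreal (5 * sqrt \<epsilon>)"
    using markov_select[OF prob_space_gauss FFm DDm IFF IDD s0 e] by blast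
  define h' where "h' x = h (Tm n U z x)" for x
  have Tmm: "Tm n U z \<in> measurable (gauss n) (gauss n)" using Tm_meas1[OF z(1)] .
  have bh': "boolean_fun n h'"
    unfolding boolean_fun_def h'_def
    using measurable_comp[OF Tmm hm] hv Tm_space[of n U z] by (simp add: o_def)
  have jh': "linear_junta n k h'"
  proof -
    define G' where "G' c = h (\<lambda>kk\<in>{..<n}. z kk - (\<Sum>u\<in>U. ip n u z * u kk) + (\<Sum>u\<in>U. c u * u kk))" for c
    have "h' x = G' (\<lambda>u\<in>U. ip n u x)" for x
    proof -
      have "Tm n U z x = (\<lambda>kk\<in>{..<n}. z kk - (\<Sum>u\<in>U. ip n u z * u kk) + (\<Sum>u\<in>U. (\<lambda>u\<in>U. ip n u x) u * u kk))"
        unfolding Tm_def by (intro restrict_ext) (simp cong: sum.cong)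
      then show ?thesis unfolding h'_def G'_def by simp
    qed
    then show ?thesis unfolding linear_junta_def using U by blast
  qed
  have sh': "surf n h' \<le> ereal (s * (1 + sqrt \<epsilon>))"
  proof -
    define A' where "A' = {x\<in>space (gauss n). Tm n U z x \<in> A}"
    have A'eq: "{x\<in>space (gauss n). h' x = 1} = A'"
      unfolding A'_def A_def h'_def using Tm_space[of n U z] by auto
    have C0: "s * (1 + sqrt \<epsilon>) \<ge> 0" using s0 e by simp
    have "Liminf (at_right 0) (\<lambda>\<delta>. ereal (measure (gauss n) (nbhd n A' \<delta> - A') / \<delta>)) \<le> ereal (s * (1 + sqrt \<epsilon>))"
    proof (rule liminf_transfer[where v = "\<lambda>m. v m z" and d = d])
      show "\<And>m. 0 < d m \<and> d m < 1 / (real m + 1)" using d by blast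
      show "liminf (\<lambda>m. ennreal (v m z)) \<le> ennreal (s * (1 + sqrt \<epsilon>))"
        using z(2) unfolding FF_def u_def .
      show "0 \<le> s * (1 + sqrt \<epsilon>)" by (rule C0)
      fix m
      have dm: "d m > 0" using d by blast
      have Bm: "{x\<in>space (gauss n). Tm n U z x \<in> B m} \<in> sets (gauss n)"
        using measurable_sets[OF Tmm Bsets[of m]] by (simp add: Int_def conj_commute)
      have "measure (gauss n) (nbhd n A' (d m) - A') \<le> measure (gauss n) {x\<in>space (gauss n). Tm n U z x \<in> B m}"
        using pr.finite_measure_mono[OF nbhd_Tm_subset[OF Uo Asp, of z "d m"] ] Bm
        unfolding A'_def B_def by blast
      then show "measure (gauss n) (nbhd n A' (d m) - A') / d m \<le> v m z"
        unfolding v_def using dm by (simp add: divide_right_mono)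
    qed
    then show ?thesis unfolding surf_def gsurf_set_def A'eq .
  qed
  have ch': "eps_close n (6 * sqrt \<epsilon>) h' f"
  proof -
    have ginv: "g (Tm n U z x) = g x" if "x \<in> space (gauss n)" for x
    proof -
      have "(\<lambda>u\<in>U. ip n u (Tm n U z x)) = (\<lambda>u\<in>U. ip n u x)"
        using Tm_ip[OF Uo] by (intro restrict_ext) simp
      then show ?thesis using gG that Tm_space[of n U z x] by simp
    qed
    define S1 where "S1 = {x\<in>space (gauss n). Tm n U z x \<in> Bhg}"
    have S1: "S1 \<in> sets (gauss n)"
      unfolding S1_def using measurable_sets[OF Tmm Bhg] by (simp add: Int_def conj_commute)
    have m1: "measure (gauss n) {x\<in>space (gauss n). h' x \<noteq> f x} \<le> measure (gauss n) (S1 \<union> {x\<in>space (gauss n). g x \<noteq> f x})"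
    proof (intro pr.finite_measure_mono)
      show "S1 \<union> {x\<in>space (gauss n). g x \<noteq> f x} \<in> sets (gauss n)" using S1 gf by simp
      show "{x\<in>space (gauss n). h' x \<noteq> f x} \<subseteq> S1 \<union> {x\<in>space (gauss n). g x \<noteq> f x}"
        unfolding S1_def Bhg_def h'_def using ginv Tm_space[of n U z] by auto
    qed
    moreover have "measure (gauss n) (S1 \<union> {x\<in>space (gauss n). g x \<noteq> f x}) \<le> measure (gauss n) S1 + measure (gauss n) {x\<in>space (gauss n). g x \<noteq> f x}"
      using S1 gf by (rule measure_Un_le)
    moreover have "measure (gauss n) S1 \<le> 5 * sqrt \<epsilon>"
    proof -
      have "ennreal (measure (gauss n) S1) = DD z" unfolding DD_def S1_def by (simp add: pr.emeasure_eq_measure)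
      then have "ennreal (measure (gauss n) S1) \<le> ennreal (5 * sqrt \<epsilon>)" using z(3) by simp
      then show ?thesis using e by (simp add: ennreal_le_iff)
    qed
    moreover have "measure (gauss n) {x\<in>space (gauss n). g x \<noteq> f x} \<le> \<epsilon>" using cg by (simp add: eps_close_def)
    moreover have "\<epsilon> \<le> sqrt \<epsilon>"
    proof -
      have "sqrt \<epsilon> * sqrt \<epsilon> = \<epsilon>" using e by simp
      moreover have "sqrt \<epsilon> \<le> 1" using e by simp
      moreover have "sqrt \<epsilon> \<ge> 0" using e by simp
      ultimately show ?thesis by (metis mult_left_le)
    qed
    ultimately have "measure (gauss n) {x\<in>space (gauss n). h' x \<noteq> f x} \<le> 6 * sqrt \<epsilon>" by linarith
    then show ?thesis unfolding eps_close_def by simp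
  qed
  show ?thesis using bh' jh' sh' ch' by blast
qed

lemma surf_const1: "surf n (\<lambda>x. 1) = 0"
proof -
  have sp: "{x \<in> space (gauss n). (1::real) = 1} = space (gauss n)" by simp
  have E: "\<And>\<delta>. nbhd n (space (gauss n)) \<delta> - space (gauss n) = {}"
    using nbhd_subset_space by blast
  show ?thesis unfolding surf_def gsurf_set_def sp E
    by (simp add: Liminf_const)
qed

theorem lemma3p6:
  shows "\<exists>C::real. \<forall>(n::nat) (k::nat) (s::real) (\<epsilon>::real) f g h.
    boolean_fun n f \<and> \<epsilon> > 0 \<and>
    boolean_fun n g \<and> linear_junta n k g \<and>
    boolean_fun n h \<and> surf n h \<le> ereal s \<and>
    eps_close n \<epsilon> g f \<and> eps_close n \<epsilon> h f \<longrightarrow>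
    (\<exists>h'. boolean_fun n h' \<and> linear_junta n k h' \<and>
       surf n h' \<le> ereal (s * (1 + sqrt \<epsilon>)) \<and> eps_close n (C * sqrt \<epsilon>) h' f)"
proof (intro exI[of _ 6] allI impI)
  fix n k :: nat and s \<epsilon> :: real and f g h :: "(nat \<Rightarrow> real) \<Rightarrow> real"
  assume H: "boolean_fun n f \<and> \<epsilon> > 0 \<and>
    boolean_fun n g \<and> linear_junta n k g \<and>
    boolean_fun n h \<and> surf n h \<le> ereal s \<and>
    eps_close n \<epsilon> g f \<and> eps_close n \<epsilon> h f"
  show "\<exists>h'. boolean_fun n h' \<and> linear_junta n k h' \<and>
       surf n h' \<le> ereal (s * (1 + sqrt \<epsilon>)) \<and> eps_close n (6 * sqrt \<epsilon>) h' f"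
  proof (cases "\<epsilon> \<le> 1")
    case True
    then show ?thesis using main_small[of n f \<epsilon> g k h s] H by blast
  next
    case False
    interpret pr: prob_space "gauss n" by (rule prob_space_gauss)
    have "(0::ereal) \<le> ereal s"
      using gsurf_nonneg[of n] H unfolding surf_def by (meson order.trans)
    then have s0: "s \<ge> 0" by simp
    have e: "\<epsilon> > 1" using False by simp
    have b: "boolean_fun n (\<lambda>x. 1)" by (simp add: boolean_fun_def)
    have j: "linear_junta n k (\<lambda>x. 1)"
      unfolding linear_junta_def by (intro exI[of _ "{}"] exI[of _ "\<lambda>_. 1"]) auto
    have sf: "surf n (\<lambda>x. 1) \<le> ereal (s * (1 + sqrt \<epsilon>))"
      using s0 e by (simp add: surf_const1)
    have "sqrt \<epsilon> > 1" using e by simp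
    then have "1 \<le> 6 * sqrt \<epsilon>" by linarith
    then have c: "eps_close n (6 * sqrt \<epsilon>) (\<lambda>x. 1) f"
      unfolding eps_close_def using pr.prob_le_1 order.trans by blast
    show ?thesis using b j sf c by blast
  qed
qed

end
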